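(* Let $F$ be a field, let $L_1,\dots,L_m$ be finite separable field extensions of $F$, and let $r_1,\dots,r_m$ be positive integers. Let $L=\prod_{i=1}^m L_i$ and $L'=\prod_{i=1}^m\big(\prod^{r_i}L_i\big)$ (the étale algebra in which $L_i$ appears $r_i$ times). Then $T_{L/F}(F)/R\simeq T_{L'/F}(F)/R$.
   Context: For an étale algebra $E=\prod_j E_j$ over $F$ (a product of finite separable field extensions), the multinorm torus $T_{E/F}$ is the kernel of $\prod_j R_{E_j/F}\mathbb{G}_m\to\mathbb{G}_m$, $(x_j)\mapsto\prod_j N_{E_j/F}(x_j)$. For a torus $T$ over $F$, $T(F)/R$ is the quotient of $T(F)$ by the subgroup of elements $R$-equivalent to the identity, $R$-equivalence being generated by: $x_0\sim x_1$ if some $F$-rational map $f:\mathbb{P}^1\dashrightarrow T$ satisfies $f(0)=x_0$, $f(1)=x_1$. *)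

theory Defs
  imports "HOL-Algebra.Coset" "HOL-Computational_Algebra.Polynomial_Factorial"
    "Jordan_Normal_Form.Determinant"
begin

text \<open>A finite separable field extension L of F is presented (primitive element
theorem) as L = F[x]/(p) with p monic, irreducible and separable. Elements of L
are represented by their reduced representatives: polynomials of degree < deg p.\<close>

definition separable_poly :: "'b::field poly \<Rightarrow> bool" where
  "separable_poly p \<longleftrightarrow> coprime p (pderiv p)"

definition sep_ext_poly :: "'b::field poly \<Rightarrow> bool" where
  "sep_ext_poly p \<longleftrightarrow> lead_coeff p = 1 \<and> irreducible p \<and> separable_poly p"

text \<open>Norm N_{L/K}(a), L = K[x]/(p): determinant of multiplication by a
on the K-basis 1, x, ..., x^(n-1), n = deg p.\<close>

definition mult_matrix :: "'b::field poly \<Rightarrow> 'b poly \<Rightarrow> 'b mat" where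
  "mult_matrix p a = mat (degree p) (degree p)
     (\<lambda>(i,j). coeff ((monom 1 j * a) mod p) i)"

definition alg_norm :: "'b::field poly \<Rightarrow> 'b poly \<Rightarrow> 'b" where
  "alg_norm p a = det (mult_matrix p a)"

text \<open>K-points of the multinorm torus of the etale algebra E = prod_j K[x]/(ps!j)
(over the base field K = 'b): tuples (x_j) with x_j in E_j and prod_j N(x_j) = 1.\<close>

definition torus_points :: "'b::field poly list \<Rightarrow> 'b poly list set" where
  "torus_points ps = {xs. length xs = length ps
       \<and> (\<forall>j<length ps. degree (xs!j) < degree (ps!j))
       \<and> (\<Prod>j<length ps. alg_norm (ps!j) (xs!j)) = 1}"

definition torus_group :: "'b::field poly list \<Rightarrow> 'b poly list monoid" where
  "torus_group ps = \<lparr> partial_object.carrier = torus_points ps,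
     monoid.mult = (\<lambda>xs ys. map (\<lambda>j. (xs!j * ys!j) mod (ps!j)) [0..<length ps]),
     monoid.one = replicate (length ps) 1 \<rparr>"

definition const_ft :: "'a::field \<Rightarrow> 'a poly fract" where
  "const_ft c = to_fract [:c:]"

definition regular_at :: "'a::field \<Rightarrow> 'a poly fract \<Rightarrow> bool" where
  "regular_at c q \<longleftrightarrow> (\<exists>n d. poly d c \<noteq> 0 \<and> q = Fract n d)"

definition eval_at :: "'a::field \<Rightarrow> 'a poly fract \<Rightarrow> 'a" where
  "eval_at c q = (THE v. \<exists>n d. poly d c \<noteq> 0 \<and> q = Fract n d \<and> v = poly n c / poly d c)"

text \<open>F-rational maps P^1 -> T, i.e. F(t)-points of T, and the elementary
R-equivalence link: f defined at t = 0 and t = 1 with f(0) = x0, f(1) = x1.\<close>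

definition R_link :: "'a::field poly list \<Rightarrow> 'a poly list \<Rightarrow> 'a poly list \<Rightarrow> bool" where
  "R_link ps x0 x1 \<longleftrightarrow> x0 \<in> torus_points ps \<and> x1 \<in> torus_points ps \<and>
     (\<exists>f. f \<in> torus_points (map (map_poly const_ft) ps)
        \<and> (\<forall>j<length f. \<forall>k. regular_at 0 (coeff (f!j) k) \<and> regular_at 1 (coeff (f!j) k))
        \<and> map (map_poly (eval_at 0)) f = x0
        \<and> map (map_poly (eval_at 1)) f = x1)"

definition R_equiv :: "'a::field poly list \<Rightarrow> 'a poly list \<Rightarrow> 'a poly list \<Rightarrow> bool" where
  "R_equiv ps = equivclp (R_link ps)"

definition R_trivial :: "'a::field poly list \<Rightarrow> 'a poly list set" where
  "R_trivial ps = {x \<in> torus_points ps. R_equiv ps x (replicate (length ps) 1)}"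

definition torus_mod_R :: "'a::field poly list \<Rightarrow> 'a poly list set monoid" where
  "torus_mod_R ps = torus_group ps Mod R_trivial ps"

end

theory Submission
  imports Defs
begin
locale phom =
  fixes S :: "'b::field set" and h :: "'b \<Rightarrow> 'c::field"
  assumes S0: "0 \<in> S" and S1: "1 \<in> S"
    and Sadd: "\<And>x y. x \<in> S \<Longrightarrow> y \<in> S \<Longrightarrow> x + y \<in> S"
    and Smult: "\<And>x y. x \<in> S \<Longrightarrow> y \<in> S \<Longrightarrow> x * y \<in> S"
    and Suminus: "\<And>x. x \<in> S \<Longrightarrow> - x \<in> S"
    and h0: "h 0 = 0" and h1: "h 1 = 1"
    and hadd: "\<And>x y. x \<in> S \<Longrightarrow> y \<in> S \<Longrightarrow> h (x + y) = h x + h y"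
    and hmult: "\<And>x y. x \<in> S \<Longrightarrow> y \<in> S \<Longrightarrow> h (x * y) = h x * h y"
begin

lemma Sdiff: "x \<in> S \<Longrightarrow> y \<in> S \<Longrightarrow> x - y \<in> S"
  using Sadd Suminus by (metis diff_conv_add_uminus)

lemma huminus: "x \<in> S \<Longrightarrow> h (- x) = - h x"
proof -
  assume x: "x \<in> S"
  have "h (x + - x) = h x + h (- x)" using hadd x Suminus by blast
  then have "h x + h (- x) = 0" using h0 by simp
  then show ?thesis by (metis add.commute eq_neg_iff_add_eq_0)
qed

lemma hdiff: "x \<in> S \<Longrightarrow> y \<in> S \<Longrightarrow> h (x - y) = h x - h y"
  using hadd huminus Suminus by (metis diff_conv_add_uminus)

lemma Ssum: "(\<And>a. a \<in> A \<Longrightarrow> f a \<in> S) \<Longrightarrow> sum f A \<in> S \<and> h (sum f A) = (\<Sum>a\<in>A. h (f a))"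
proof (induction A rule: infinite_finite_induct)
  case (infinite A) then show ?case using S0 h0 by simp
next
  case empty then show ?case using S0 h0 by simp
next
  case (insert x F) then show ?case using Sadd hadd by simp
qed

lemma Sprod: "(\<And>a. a \<in> A \<Longrightarrow> f a \<in> S) \<Longrightarrow> prod f A \<in> S \<and> h (prod f A) = (\<Prod>a\<in>A. h (f a))"
proof (induction A rule: infinite_finite_induct)
  case (infinite A) then show ?case using S1 h1 by simp
next
  case empty then show ?case using S1 h1 by simp
next
  case (insert x F) then show ?case using Smult hmult by simp
qed

lemma Spow: "x \<in> S \<Longrightarrow> x ^ k \<in> S \<and> h (x ^ k) = h x ^ k"
  by (induction k) (auto simp: S1 h1 Smult hmult)

definition PS :: "'b poly \<Rightarrow> bool" where "PS f \<longleftrightarrow> (\<forall>k. coeff f k \<in> S)"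

lemma PS_0[simp]: "PS 0" by (simp add: PS_def S0)
lemma PS_1[simp]: "PS 1" by (simp add: PS_def coeff_1 S0 S1)
lemma PS_const: "c \<in> S \<Longrightarrow> PS [:c:]" by (simp add: PS_def coeff_pCons S0 split: nat.split)
lemma PS_monom: "c \<in> S \<Longrightarrow> PS (monom c n)" by (simp add: PS_def coeff_monom S0)
lemma PS_add: "PS f \<Longrightarrow> PS g \<Longrightarrow> PS (f + g)" by (simp add: PS_def Sadd)
lemma PS_uminus: "PS f \<Longrightarrow> PS (- f)" by (simp add: PS_def Suminus)
lemma PS_diff: "PS f \<Longrightarrow> PS g \<Longrightarrow> PS (f - g)" by (simp add: PS_def Sdiff)
lemma PS_smult: "c \<in> S \<Longrightarrow> PS f \<Longrightarrow> PS (smult c f)" by (simp add: PS_def Smult)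
lemma PS_mult: "PS f \<Longrightarrow> PS g \<Longrightarrow> PS (f * g)"
proof -
  assume f: "PS f" and g: "PS g"
  have "coeff (f * g) k \<in> S" for k
  proof -
    have "\<And>i. coeff f i * coeff g (k - i) \<in> S" using f g Smult by (simp add: PS_def)
    then show ?thesis unfolding coeff_mult using Ssum[of "{..k}" "\<lambda>i. coeff f i * coeff g (k - i)"] by blast
  qed
  then show ?thesis by (simp add: PS_def)
qed
lemma PS_power: "PS f \<Longrightarrow> PS (f ^ k)" by (induction k) (auto simp: PS_mult)

lemma coeff_mh: "coeff (map_poly h f) k = h (coeff f k)" by (simp add: coeff_map_poly h0)

lemma mh_add: "PS f \<Longrightarrow> PS g \<Longrightarrow> map_poly h (f + g) = map_poly h f + map_poly h g"
  by (rule poly_eqI) (simp add: coeff_mh hadd PS_def)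
lemma mh_uminus: "PS f \<Longrightarrow> map_poly h (- f) = - map_poly h f"
  by (rule poly_eqI) (simp add: coeff_mh huminus PS_def)
lemma mh_diff: "PS f \<Longrightarrow> PS g \<Longrightarrow> map_poly h (f - g) = map_poly h f - map_poly h g"
  by (rule poly_eqI) (simp add: coeff_mh hdiff PS_def)
lemma mh_smult: "c \<in> S \<Longrightarrow> PS f \<Longrightarrow> map_poly h (smult c f) = smult (h c) (map_poly h f)"
  by (rule poly_eqI) (simp add: coeff_mh hmult PS_def)
lemma mh_monom: "map_poly h (monom c n) = monom (h c) n"
  by (rule poly_eqI) (simp add: coeff_mh coeff_monom h0)
lemma mh_const: "map_poly h [:c:] = [:h c:]"
  by (rule poly_eqI) (simp add: coeff_mh coeff_pCons h0 split: nat.split)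
lemma mh_1: "map_poly h 1 = 1"
  using mh_const[of 1] h1 by (simp add: one_pCons)
lemma mh_mult: "PS f \<Longrightarrow> PS g \<Longrightarrow> map_poly h (f * g) = map_poly h f * map_poly h g"
proof (rule poly_eqI)
  fix n assume f: "PS f" and g: "PS g"
  have "\<And>i. coeff f i * coeff g (n - i) \<in> S" using f g Smult by (simp add: PS_def)
  then have "h (coeff (f * g) n) = (\<Sum>i\<le>n. h (coeff f i * coeff g (n - i)))"
    unfolding coeff_mult using Ssum[of "{..n}" "\<lambda>i. coeff f i * coeff g (n - i)"] by blast
  also have "\<dots> = (\<Sum>i\<le>n. h (coeff f i) * h (coeff g (n - i)))"
    using f g hmult by (simp add: PS_def)
  finally show "coeff (map_poly h (f * g)) n = coeff (map_poly h f * map_poly h g) n"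
    by (simp add: coeff_mh coeff_mult)
qed
lemma mh_power: "PS f \<Longrightarrow> map_poly h (f ^ k) = map_poly h f ^ k"
  by (induction k) (auto simp: mh_1 mh_mult PS_power)

lemma degree_mh_le: "degree (map_poly h f) \<le> degree f"
  by (rule map_poly_degree_leq)

lemma degree_mh_monic: assumes "lead_coeff P = 1" shows "degree (map_poly h P) = degree P"
proof -
  have "coeff (map_poly h P) (degree P) = 1" using assms h1 by (simp add: coeff_mh)
  then have "degree P \<le> degree (map_poly h P)" by (simp add: le_degree)
  then show ?thesis using degree_mh_le[of P] by simp
qed

lemma lead_mh_monic: assumes "lead_coeff P = 1" shows "lead_coeff (map_poly h P) = 1"
  using degree_mh_monic[OF assms] assms h1 by (simp add: coeff_mh)

lemma degree_lt_if_coeffs_zero: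
  fixes g :: "'d::zero poly"
  assumes "\<forall>k\<ge>d. coeff g k = 0" "g \<noteq> 0" shows "degree g < d"
  using assms leading_coeff_neq_0 not_le by blast

lemma mh_mod:
  assumes P: "PS P" "lead_coeff P = 1"
  shows "PS f \<Longrightarrow> PS (f mod P) \<and> map_poly h (f mod P) = map_poly h f mod map_poly h P"
proof (induction "degree f" arbitrary: f rule: less_induct)
  case less
  have hP: "degree (map_poly h P) = degree P" using degree_mh_monic P by blast
  show ?case
  proof (cases "degree f < degree P")
    case True
    then have "degree (map_poly h f) < degree (map_poly h P)"
      using hP degree_mh_le[of f] by linarith
    then show ?thesis using True less.prems by (simp add: mod_poly_less)
  next
    case False
    define m where "m = degree f - degree P"
    define f' where "f' = f - monom (lead_coeff f) m * P"
    have PSf': "PS f'" unfolding f'_def using less.prems P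
      by (intro PS_diff PS_mult PS_monom) (auto simp: PS_def)
    have e1: "f mod P = f' mod P"
    proof -
      have "f = f' + monom (lead_coeff f) m * P" by (simp add: f'_def)
      then show ?thesis by (metis mod_mult_self1)
    qed
    have e2: "map_poly h f mod map_poly h P = map_poly h f' mod map_poly h P"
    proof -
      have PSm: "PS (monom (lead_coeff f) m * P)" using less.prems P
        by (intro PS_mult PS_monom) (auto simp: PS_def)
      have "map_poly h f' = map_poly h f - map_poly h (monom (lead_coeff f) m * P)"
        unfolding f'_def using less.prems PSm by (rule mh_diff)
      also have "map_poly h (monom (lead_coeff f) m * P) = monom (h (lead_coeff f)) m * map_poly h P"
      proof -
        have "lead_coeff f \<in> S" using less.prems by (simp add: PS_def)
        then show ?thesis using mh_mult[OF PS_monom P(1)] mh_monom by simp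
      qed
      finally have "map_poly h f = map_poly h f' + monom (h (lead_coeff f)) m * map_poly h P"
        by simp
      then show ?thesis by (metis mod_mult_self1)
    qed
    have cz: "\<forall>k\<ge>degree f. coeff f' k = 0"
    proof (intro allI impI)
      fix k assume k: "degree f \<le> k"
      show "coeff f' k = 0"
      proof (cases "k = degree f")
        case True
        then have "k - m = degree P" using False m_def by linarith
        then show ?thesis using True False P(2) by (simp add: f'_def coeff_monom_mult m_def)
      next
        case False
        then have "k > degree f" using k by simp
        then have "k - m > degree P" using \<open>\<not> degree f < degree P\<close> m_def by linarith
        then show ?thesis using \<open>k > degree f\<close> by (simp add: f'_def coeff_monom_mult coeff_eq_0 m_def)
      qed
    qed
    show ?thesis
    proof (cases "f' = 0")
      case True
      then show ?thesis using e1 e2 by (simp add: map_poly_0)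
    next
      case False
      then have "degree f' < degree f" using cz degree_lt_if_coeffs_zero by blast
      from less.hyps[OF this PSf'] show ?thesis using e1 e2 by simp
    qed
  qed
qed

lemma sign_S: "of_int (sign p) \<in> S \<and> h (of_int (sign p)) = of_int (sign p)"
  by (cases "evenperm p") (auto simp: sign_def S1 Suminus h1 huminus)

lemma h_det:
  assumes M: "M \<in> carrier_mat n n" and ent: "\<And>i j. i < n \<Longrightarrow> j < n \<Longrightarrow> M $$ (i, j) \<in> S"
  shows "det M \<in> S \<and> h (det M) = det (map_mat h M)"
proof -
  let ?P = "{p. p permutes {0..<n}}"
  have fin: "finite ?P" by (simp add: finite_permutations)
  have ent': "\<And>p i. p \<in> ?P \<Longrightarrow> i \<in> {0..<n} \<Longrightarrow> M $$ (i, p i) \<in> S"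
    using ent permutes_in_image by fastforce
  have pr: "\<And>p. p \<in> ?P \<Longrightarrow> (\<Prod>i = 0..<n. M $$ (i, p i)) \<in> S \<and>
        h (\<Prod>i = 0..<n. M $$ (i, p i)) = (\<Prod>i = 0..<n. map_mat h M $$ (i, p i))"
  proof -
    fix p assume p: "p \<in> ?P"
    have "\<And>i. i \<in> {0..<n} \<Longrightarrow> map_mat h M $$ (i, p i) = h (M $$ (i, p i))"
      using M p permutes_in_image by fastforce
    then show "?thesis p" using Sprod[of "{0..<n}" "\<lambda>i. M $$ (i, p i)"] ent'[OF p] by simp
  qed
  have tS: "\<And>p. p \<in> ?P \<Longrightarrow> of_int (sign p) * (\<Prod>i = 0..<n. M $$ (i, p i)) \<in> S"
    using pr sign_S Smult by blast
  have "det M = (\<Sum>p\<in>?P. of_int (sign p) * (\<Prod>i = 0..<n. M $$ (i, p i)))"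
    using det_def'[OF M] by simp
  moreover have "det (map_mat h M) = (\<Sum>p\<in>?P. of_int (sign p) * (\<Prod>i = 0..<n. map_mat h M $$ (i, p i)))"
    using det_def'[of "map_mat h M" n] M by simp
  moreover have "h (\<Sum>p\<in>?P. of_int (sign p) * (\<Prod>i = 0..<n. M $$ (i, p i)))
     = (\<Sum>p\<in>?P. of_int (sign p) * (\<Prod>i = 0..<n. map_mat h M $$ (i, p i)))"
  proof -
    have "h (\<Sum>p\<in>?P. of_int (sign p) * (\<Prod>i = 0..<n. M $$ (i, p i)))
        = (\<Sum>p\<in>?P. h (of_int (sign p) * (\<Prod>i = 0..<n. M $$ (i, p i))))"
      using Ssum[of ?P "\<lambda>p. of_int (sign p) * (\<Prod>i = 0..<n. M $$ (i, p i))", OF tS] by blast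
    also have "\<dots> = (\<Sum>p\<in>?P. of_int (sign p) * (\<Prod>i = 0..<n. map_mat h M $$ (i, p i)))"
    proof (rule sum.cong)
      fix p assume p: "p \<in> ?P"
      show "h (of_int (sign p) * (\<Prod>i = 0..<n. M $$ (i, p i))) = of_int (sign p) * (\<Prod>i = 0..<n. map_mat h M $$ (i, p i))"
        using hmult[of "of_int (sign p)"] sign_S[of p] pr[OF p] by simp
    qed simp
    finally show ?thesis .
  qed
  ultimately show ?thesis using Ssum[of ?P "\<lambda>p. of_int (sign p) * (\<Prod>i = 0..<n. M $$ (i, p i))", OF tS] by simp
qed

lemma h_norm:
  assumes P: "PS P" "lead_coeff P = 1" and f: "PS f"
  shows "alg_norm P f \<in> S \<and> h (alg_norm P f) = alg_norm (map_poly h P) (map_poly h f)"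
proof -
  have ent: "\<And>i j. coeff ((monom 1 j * f) mod P) i \<in> S \<and>
      h (coeff ((monom 1 j * f) mod P) i) = coeff ((monom 1 j * map_poly h f) mod map_poly h P) i"
  proof -
    fix i j
    have ps: "PS (monom 1 j * f)" using f S1 by (simp add: PS_mult PS_monom)
    have e: "map_poly h (monom 1 j * f) = monom 1 j * map_poly h f"
      using f S1 by (simp add: mh_mult mh_monom h1 PS_monom)
    from mh_mod[OF P ps] have "PS (monom 1 j * f mod P)"
      and "map_poly h (monom 1 j * f mod P) = monom 1 j * map_poly h f mod map_poly h P"
      using e by auto
    then show "?thesis i j" by (metis PS_def coeff_mh)
  qed
  have M: "mult_matrix P f \<in> carrier_mat (degree P) (degree P)" by (simp add: mult_matrix_def)
  have "map_mat h (mult_matrix P f) = mult_matrix (map_poly h P) (map_poly h f)"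
    by (rule eq_matI) (auto simp: mult_matrix_def degree_mh_monic[OF P(2)] ent)
  then show ?thesis using h_det[OF M] ent unfolding alg_norm_def by (simp add: mult_matrix_def)
qed

end

lemma poly_expand_lt:
  fixes c :: "'b::comm_ring_1 poly"
  assumes "\<forall>k\<ge>n. coeff c k = 0"
  shows "c = (\<Sum>l<n. monom (coeff c l) l)"
proof (rule poly_eqI)
  fix k
  have "coeff (\<Sum>l<n. monom (coeff c l) l) k = (\<Sum>l<n. if l = k then coeff c l else 0)"
    by (simp add: coeff_sum coeff_monom)
  also have "\<dots> = (if k < n then coeff c k else 0)" by (simp add: sum.delta)
  also have "\<dots> = coeff c k" using assms by auto
  finally show "coeff c k = coeff (\<Sum>l<n. monom (coeff c l) l) k" by simp
qed

lemma mod_sum_poly: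
  fixes p :: "'b::field poly"
  shows "(\<Sum>l\<in>A. f l) mod p = (\<Sum>l\<in>A. f l mod p)"
  by (induction A rule: infinite_finite_induct) (simp_all add: poly_mod_add_left)

lemma key_coeff:
  fixes p a c :: "'b::field poly"
  assumes c: "\<forall>k\<ge>degree p. coeff c k = 0"
  shows "coeff ((a * c) mod p) i = (\<Sum>l<degree p. coeff ((monom 1 l * a) mod p) i * coeff c l)"
proof -
  let ?n = "degree p"
  have "a * c = a * (\<Sum>l<?n. monom (coeff c l) l)" using poly_expand_lt[OF c] by simp
  also have "\<dots> = (\<Sum>l<?n. smult (coeff c l) (monom 1 l * a))"
  proof -
    have "\<And>l. a * monom (coeff c l) l = smult (coeff c l) (monom 1 l * a)"
    proof -
      fix l
      have "monom (coeff c l) l = smult (coeff c l) (monom 1 l)" by (simp add: smult_monom)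
      then show "a * monom (coeff c l) l = smult (coeff c l) (monom 1 l * a)"
        by (simp add: mult.commute)
    qed
    then show ?thesis by (simp add: sum_distrib_left)
  qed
  finally have "(a * c) mod p = (\<Sum>l<?n. smult (coeff c l) ((monom 1 l * a) mod p))"
    by (simp add: mod_sum_poly mod_smult_left)
  then show ?thesis by (simp add: coeff_sum mult.commute)
qed

lemma mod_coeffs_zero:
  fixes p x :: "'b::field poly"
  assumes "p \<noteq> 0" shows "\<forall>k\<ge>degree p. coeff (x mod p) k = 0"
  using degree_mod_less[OF assms, of x] by (metis coeff_0 coeff_eq_0 leD le_less_trans nat_less_le)

lemma mm_mult:
  fixes p a b :: "'b::field poly"
  assumes p: "p \<noteq> 0"
  shows "mult_matrix p (a * b) = mult_matrix p a * mult_matrix p b"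
proof (rule eq_matI)
  fix i j assume i: "i < dim_row (mult_matrix p a * mult_matrix p b)"
    and j: "j < dim_col (mult_matrix p a * mult_matrix p b)"
  let ?n = "degree p"
  have i': "i < ?n" and j': "j < ?n" using i j by (auto simp: mult_matrix_def)
  define c where "c = (monom 1 j * b) mod p"
  have c: "\<forall>k\<ge>?n. coeff c k = 0" unfolding c_def using mod_coeffs_zero[OF p] by blast
  have "(monom 1 j * (a * b)) mod p = (a * c) mod p"
    unfolding c_def by (metis mod_mult_right_eq mult.left_commute)
  then have "mult_matrix p (a * b) $$ (i, j) = (\<Sum>l<?n. coeff ((monom 1 l * a) mod p) i * coeff c l)"
    using key_coeff[OF c, of a i] i' j' by (simp add: mult_matrix_def)
  also have "\<dots> = (mult_matrix p a * mult_matrix p b) $$ (i, j)"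
    using i' j' by (simp add: mult_matrix_def scalar_prod_def c_def lessThan_atLeast0)
  finally show "mult_matrix p (a * b) $$ (i, j) = (mult_matrix p a * mult_matrix p b) $$ (i, j)" .
qed (auto simp: mult_matrix_def)

lemma mm_carrier: "mult_matrix p a \<in> carrier_mat (degree p) (degree p)"
  by (simp add: mult_matrix_def)

lemma norm_mult:
  fixes p a b :: "'b::field poly"
  assumes "p \<noteq> 0" shows "alg_norm p (a * b) = alg_norm p a * alg_norm p b"
  unfolding alg_norm_def mm_mult[OF assms] by (rule det_mult[OF mm_carrier mm_carrier])

lemma mm_mod:
  fixes p a :: "'b::field poly"
  shows "mult_matrix p (a mod p) = mult_matrix p a"
  unfolding mult_matrix_def by (simp add: mod_mult_right_eq)

lemma norm_mod: "alg_norm p (a mod p) = alg_norm p (a::'b::field poly)"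
  unfolding alg_norm_def mm_mod ..

lemma norm_one:
  fixes p :: "'b::field poly"
  shows "alg_norm p 1 = 1"
proof -
  have "mult_matrix p 1 = 1\<^sub>m (degree p)"
  proof (rule eq_matI)
    fix i j assume "i < dim_row (1\<^sub>m (degree p))" "j < dim_col (1\<^sub>m (degree p))"
    then have ij: "i < degree p" "j < degree p" by auto
    then have "monom 1 j mod p = (monom (1::'b) j)"
      by (intro mod_poly_less) (simp add: degree_monom_eq)
    then show "mult_matrix p 1 $$ (i, j) = 1\<^sub>m (degree p) $$ (i, j)"
      using ij by (simp add: mult_matrix_def coeff_monom)
  qed (auto simp: mult_matrix_def)
  then show ?thesis by (simp add: alg_norm_def)
qed

lemma norm_zero:
  fixes p :: "'b::field poly"
  assumes "degree p > 0" shows "alg_norm p 0 = 0"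
proof -
  have "mult_matrix p 0 = 0\<^sub>m (degree p) (degree p)"
    by (rule eq_matI) (auto simp: mult_matrix_def)
  then show ?thesis using assms by (simp add: alg_norm_def det_zero)
qed

lemma norm_smult:
  fixes p a :: "'b::field poly"
  shows "alg_norm p (smult c a) = c ^ degree p * alg_norm p a"
proof -
  have "mult_matrix p (smult c a) = c \<cdot>\<^sub>m mult_matrix p a"
    by (rule eq_matI) (auto simp: mult_matrix_def mod_smult_left)
  then show ?thesis by (simp add: alg_norm_def det_smult mult_matrix_def)
qed

lemma norm_power:
  fixes p a :: "'b::field poly"
  assumes "p \<noteq> 0" shows "alg_norm p (a ^ k) = alg_norm p a ^ k"
  by (induction k) (simp_all add: norm_one norm_mult[OF assms])

lemma inv_exists:
  fixes p a :: "'b::field poly"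
  assumes p: "degree p > 0" and na: "alg_norm p a \<noteq> 0"
  shows "\<exists>b. degree b < degree p \<and> (a * b) mod p = 1"
proof -
  let ?n = "degree p"
  let ?A = "mult_matrix p a"
  have A: "?A \<in> carrier_mat ?n ?n" by (rule mm_carrier)
  have dA: "det ?A \<noteq> 0" using na by (simp add: alg_norm_def)
  define B where "B = (inverse (det ?A)) \<cdot>\<^sub>m adj_mat ?A"
  have adj: "?A * adj_mat ?A = det ?A \<cdot>\<^sub>m 1\<^sub>m ?n" "adj_mat ?A \<in> carrier_mat ?n ?n"
    using adj_mat[OF A] by auto
  have AB: "?A * B = 1\<^sub>m ?n"
  proof -
    have "?A * B = inverse (det ?A) \<cdot>\<^sub>m (?A * adj_mat ?A)"
      unfolding B_def using mult_smult_distrib[OF A adj(2)] by simp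
    also have "\<dots> = 1\<^sub>m ?n" unfolding adj(1) using dA by (intro eq_matI) auto
    finally show ?thesis .
  qed
  define b where "b = (\<Sum>l<?n. monom (B $$ (l, 0)) l)"
  have cb: "\<And>l. coeff b l = (if l < ?n then B $$ (l, 0) else 0)"
    by (simp add: b_def coeff_sum coeff_monom sum.delta)
  have db: "degree b < ?n"
  proof -
    have "\<forall>k\<ge>?n. coeff b k = 0" using cb by simp
    then show ?thesis using p
      by (cases "b = 0") (auto, metis leading_coeff_0_iff not_le)
  qed
  have "(a * b) mod p = 1"
  proof (rule poly_eqI)
    fix i
    show "coeff ((a * b) mod p) i = coeff 1 i"
    proof (cases "i < ?n")
      case True
      have "coeff ((a * b) mod p) i = (\<Sum>l<?n. ?A $$ (i, l) * B $$ (l, 0))"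
        using key_coeff[of p b a i] cb True by (simp add: mult_matrix_def)
      also have "\<dots> = (?A * B) $$ (i, 0)"
        using True p A B_def adj by (simp add: scalar_prod_def lessThan_atLeast0)
      also have "\<dots> = (if i = 0 then 1 else 0)" using AB True p by simp
      finally show ?thesis by (simp add: coeff_1)
    next
      case False
      have "p \<noteq> 0" using p by auto
      then have "coeff ((a * b) mod p) i = 0" using mod_coeffs_zero[of p "a * b"] False by simp
      then show ?thesis using False p by (simp add: coeff_1)
    qed
  qed
  then show ?thesis using db by blast
qed

definition dpos :: "'b::field poly list \<Rightarrow> bool" where
  "dpos ps \<longleftrightarrow> (\<forall>p\<in>set ps. degree p > 0)"

lemma tg_simps[simp]:
  "carrier (torus_group ps) = torus_points ps"
  "monoid.one (torus_group ps) = replicate (length ps) 1"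
  "monoid.mult (torus_group ps) x y = map (\<lambda>j. (x!j * y!j) mod (ps!j)) [0..<length ps]"
  by (simp_all add: torus_group_def)

lemma deg_mod_lt:
  fixes p x :: "'b::field poly"
  assumes "degree p > 0" shows "degree (x mod p) < degree p"
proof -
  have "p \<noteq> 0" using assms by auto
  then show ?thesis using degree_mod_less[of p x] assms by auto
qed

lemma tp_norm_nz:
  assumes "x \<in> torus_points ps" "j < length ps"
  shows "alg_norm (ps!j) (x!j) \<noteq> 0"
proof
  assume z: "alg_norm (ps!j) (x!j) = 0"
  have "(\<Prod>j<length ps. alg_norm (ps!j) (x!j)) = 0"
    using assms(2) z by (metis finite_lessThan lessThan_iff prod_zero)
  moreover have "(\<Prod>j<length ps. alg_norm (ps!j) (x!j)) = 1" using assms(1) by (simp add: torus_points_def)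
  ultimately show False by simp
qed

lemma tp_mult_closed:
  fixes ps :: "'b::field poly list"
  assumes d: "dpos ps" and x: "x \<in> torus_points ps" and y: "y \<in> torus_points ps"
  shows "map (\<lambda>j. (x!j * y!j) mod (ps!j)) [0..<length ps] \<in> torus_points ps"
proof -
  have pj: "\<And>j. j < length ps \<Longrightarrow> degree (ps!j) > 0" using d by (auto simp: dpos_def)
  have "(\<Prod>j<length ps. alg_norm (ps!j) ((x!j * y!j) mod (ps!j)))
      = (\<Prod>j<length ps. alg_norm (ps!j) (x!j) * alg_norm (ps!j) (y!j))"
  proof (rule prod.cong)
    fix j assume "j \<in> {..<length ps}"
    then have "ps!j \<noteq> 0" using pj by fastforce
    then show "alg_norm (ps!j) ((x!j * y!j) mod (ps!j)) = alg_norm (ps!j) (x!j) * alg_norm (ps!j) (y!j)"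
      by (simp add: norm_mod norm_mult)
  qed simp
  also have "\<dots> = 1" using x y by (simp add: prod.distrib torus_points_def)
  finally show ?thesis using pj x y by (simp add: torus_points_def deg_mod_lt)
qed

lemma tp_one:
  fixes ps :: "'b::field poly list"
  assumes d: "dpos ps"
  shows "replicate (length ps) 1 \<in> torus_points ps"
  using d by (auto simp: torus_points_def dpos_def norm_one)

lemma torus_comm_group:
  fixes ps :: "'b::field poly list"
  assumes d: "dpos ps"
  shows "comm_group (torus_group ps)"
proof (rule comm_groupI)
  have pj: "\<And>j. j < length ps \<Longrightarrow> degree (ps!j) > 0" using d by (auto simp: dpos_def)
  show "\<And>x y. x \<in> carrier (torus_group ps) \<Longrightarrow> y \<in> carrier (torus_group ps) \<Longrightarrow>
      x \<otimes>\<^bsub>torus_group ps\<^esub> y \<in> carrier (torus_group ps)"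
    using tp_mult_closed[OF d] by simp
  show "\<one>\<^bsub>torus_group ps\<^esub> \<in> carrier (torus_group ps)" using tp_one[OF d] by simp
  show "\<And>x y z. x \<in> carrier (torus_group ps) \<Longrightarrow> y \<in> carrier (torus_group ps) \<Longrightarrow>
      z \<in> carrier (torus_group ps) \<Longrightarrow>
      x \<otimes>\<^bsub>torus_group ps\<^esub> y \<otimes>\<^bsub>torus_group ps\<^esub> z =
      x \<otimes>\<^bsub>torus_group ps\<^esub> (y \<otimes>\<^bsub>torus_group ps\<^esub> z)"
    by (auto intro!: nth_equalityI simp: torus_points_def mod_mult_left_eq mod_mult_right_eq mult.assoc)
  show "\<And>x y. x \<in> carrier (torus_group ps) \<Longrightarrow> y \<in> carrier (torus_group ps) \<Longrightarrow>
      x \<otimes>\<^bsub>torus_group ps\<^esub> y = y \<otimes>\<^bsub>torus_group ps\<^esub> x"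
    by (auto simp: mult.commute)
  show "\<And>x. x \<in> carrier (torus_group ps) \<Longrightarrow> \<one>\<^bsub>torus_group ps\<^esub> \<otimes>\<^bsub>torus_group ps\<^esub> x = x"
    by (auto intro!: nth_equalityI simp: torus_points_def mod_poly_less)
  show "\<exists>y\<in>carrier (torus_group ps). y \<otimes>\<^bsub>torus_group ps\<^esub> x = \<one>\<^bsub>torus_group ps\<^esub>"
    if x: "x \<in> carrier (torus_group ps)" for x
  proof -
    have x': "x \<in> torus_points ps" using x by simp
    define B where "B j = (SOME b. degree b < degree (ps!j) \<and> (x!j * b) mod (ps!j) = 1)" for j
    have B: "degree (B j) < degree (ps!j) \<and> (x!j * B j) mod (ps!j) = 1" if j: "j < length ps" for j
      unfolding B_def by (rule someI_ex, rule inv_exists[OF pj[OF j] tp_norm_nz[OF x' j]])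
    define y where "y = map B [0..<length ps]"
    have ny: "alg_norm (ps!j) (y!j) * alg_norm (ps!j) (x!j) = 1" if j: "j < length ps" for j
    proof -
      have "ps!j \<noteq> 0" using pj[OF j] by auto
      then have "alg_norm (ps!j) (y!j) * alg_norm (ps!j) (x!j) = alg_norm (ps!j) ((x!j * B j) mod (ps!j))"
        using j by (simp add: y_def norm_mod norm_mult mult.commute)
      then show ?thesis using B[OF j] by (simp add: norm_one)
    qed
    have "(\<Prod>j<length ps. alg_norm (ps!j) (y!j)) = (\<Prod>j<length ps. alg_norm (ps!j) (y!j)) * (\<Prod>j<length ps. alg_norm (ps!j) (x!j))"
      using x' by (simp add: torus_points_def)
    also have "\<dots> = 1" using ny by (simp add: prod.distrib[symmetric])
    finally have "y \<in> torus_points ps" using B by (simp add: torus_points_def y_def)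
    moreover have "y \<otimes>\<^bsub>torus_group ps\<^esub> x = \<one>\<^bsub>torus_group ps\<^esub>"
      using B by (auto intro!: nth_equalityI simp: y_def mult.commute)
    ultimately show ?thesis by auto
  qed
qed

section \<open>Evaluation of rational functions\<close>

lemma eval_Fract:
  fixes n d :: "'a::field poly"
  assumes "poly d c \<noteq> 0"
  shows "eval_at c (Fract n d) = poly n c / poly d c"
  unfolding eval_at_def
proof (rule the_equality)
  show "\<exists>n' d'. poly d' c \<noteq> 0 \<and> Fract n d = Fract n' d' \<and> poly n c / poly d c = poly n' c / poly d' c"
    using assms by blast
next
  fix v assume "\<exists>n' d'. poly d' c \<noteq> 0 \<and> Fract n d = Fract n' d' \<and> v = poly n' c / poly d' c"
  then obtain n' d' where d': "poly d' c \<noteq> 0" and e: "Fract n d = Fract n' d'" and v: "v = poly n' c / poly d' c"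
    by blast
  have "d \<noteq> 0" "d' \<noteq> 0" using assms d' by auto
  then have "n * d' = n' * d" using e eq_fract by auto
  then have eq: "poly n c * poly d' c = poly n' c * poly d c" by (metis poly_mult)
  have "poly n' c / poly d' c = poly n c / poly d c"
    by (simp add: frac_eq_eq[OF d' assms] eq[symmetric])
  then show "v = poly n c / poly d c" using v by simp
qed

lemma regular_Fract: "poly d c \<noteq> 0 \<Longrightarrow> regular_at c (Fract n d)"
  unfolding regular_at_def by blast

lemma regularE:
  assumes "regular_at c q"
  obtains n d where "poly d c \<noteq> 0" "q = Fract n d"
  using assms unfolding regular_at_def by blast

lemma phom_ev: "phom {q. regular_at c q} (eval_at c)"
proof
  show "0 \<in> {q. regular_at c q}" unfolding Zero_fract_def by (simp add: regular_Fract)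
  show "1 \<in> {q. regular_at c q}" unfolding One_fract_def by (simp add: regular_Fract)
  show "eval_at c 0 = 0" unfolding Zero_fract_def by (simp add: eval_Fract)
  show "eval_at c 1 = 1" unfolding One_fract_def by (simp add: eval_Fract)
  fix x y assume x: "x \<in> {q. regular_at c q}" and y: "y \<in> {q. regular_at c q}"
  obtain n1 d1 where 1: "poly d1 c \<noteq> 0" "x = Fract n1 d1" using x regularE by blast
  obtain n2 d2 where 2: "poly d2 c \<noteq> 0" "y = Fract n2 d2" using y regularE by blast
  have nz: "d1 \<noteq> 0" "d2 \<noteq> 0" using 1 2 by auto
  have xy: "x + y = Fract (n1 * d2 + n2 * d1) (d1 * d2)" using 1 2 nz by (simp add: add_fract)
  have xy': "x * y = Fract (n1 * n2) (d1 * d2)" using 1 2 by (simp add: mult_fract)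
  show "x + y \<in> {q. regular_at c q}" using xy 1 2 by (simp add: regular_Fract)
  show "x * y \<in> {q. regular_at c q}" using xy' 1 2 by (simp add: regular_Fract)
  show "eval_at c (x + y) = eval_at c x + eval_at c y"
    using xy 1 2 by (simp add: eval_Fract field_simps)
  show "eval_at c (x * y) = eval_at c x * eval_at c y"
    using xy' 1 2 by (simp add: eval_Fract)
next
  fix x assume x: "x \<in> {q. regular_at c q}"
  obtain n1 d1 where 1: "poly d1 c \<noteq> 0" "x = Fract n1 d1" using x regularE by blast
  show "- x \<in> {q. regular_at c q}" using 1 by (simp add: regular_Fract minus_fract)
qed

lemma const_ft_Fract: "const_ft a = Fract [:a:] 1"
  by (simp add: const_ft_def to_fract_def)

lemma regular_const: "regular_at c (const_ft a)"
  by (simp add: const_ft_Fract regular_Fract)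

lemma eval_const[simp]: "eval_at c (const_ft a) = a"
  by (simp add: const_ft_Fract eval_Fract)

lemma regular_inverse:
  assumes "regular_at c q" "eval_at c q \<noteq> 0"
  shows "regular_at c (inverse q) \<and> eval_at c (inverse q) = inverse (eval_at c q)"
proof -
  obtain n d where 1: "poly d c \<noteq> 0" "q = Fract n d" using assms regularE by blast
  have "poly n c \<noteq> 0" using assms(2) 1 by (simp add: eval_Fract)
  then show ?thesis using 1 by (simp add: inverse_fract regular_Fract eval_Fract)
qed

lemma phom_const: "phom UNIV const_ft"
proof
  show "const_ft 1 = 1" by (simp add: const_ft_def one_pCons[symmetric])
  fix x y :: 'a
  show "const_ft (x + y) = const_ft x + const_ft y"
    unfolding const_ft_def by (simp only: to_fract_add[symmetric]) simp
  show "const_ft (x * y) = const_ft x * const_ft y"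
    unfolding const_ft_def by (simp only: to_fract_mult[symmetric]) simp
qed (simp_all add: const_ft_def)

interpretation E: phom "{q. regular_at c q}" "eval_at c" for c
  by (rule phom_ev)

interpretation C: phom UNIV const_ft
  by (rule phom_const)

abbreviation Pm :: "'a::field poly list \<Rightarrow> 'a poly fract poly list" where
  "Pm ps \<equiv> map (map_poly const_ft) ps"

definition mon :: "'a::field poly list \<Rightarrow> bool" where
  "mon ps \<longleftrightarrow> (\<forall>p\<in>set ps. lead_coeff p = 1 \<and> degree p > 0)"

definition RP :: "'a::field poly fract poly \<Rightarrow> bool" where
  "RP f \<longleftrightarrow> E.PS 0 f \<and> E.PS 1 f"

definition Ev :: "'a::field \<Rightarrow> 'a poly fract poly list \<Rightarrow> 'a poly list" where
  "Ev c f = map (map_poly (eval_at c)) f"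

definition RPath :: "'a::field poly list \<Rightarrow> 'a poly fract poly list \<Rightarrow> bool" where
  "RPath ps f \<longleftrightarrow> f \<in> torus_points (Pm ps) \<and> (\<forall>j<length f. RP (f!j))"

lemma E_PS_iff: "E.PS c f \<longleftrightarrow> (\<forall>k. regular_at c (coeff f k))"
  by (simp add: E.PS_def)

lemma mon_dpos: "mon ps \<Longrightarrow> dpos ps"
  by (simp add: mon_def dpos_def)

lemma const_ft_nz: "x \<noteq> 0 \<Longrightarrow> const_ft x \<noteq> 0"
  by (simp add: const_ft_def)

lemma degree_Pm[simp]: "degree (map_poly const_ft p) = degree p"
  by (rule degree_map_poly) (simp add: const_ft_nz)

lemma lead_Pm: "lead_coeff p = 1 \<Longrightarrow> lead_coeff (map_poly const_ft p) = 1"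
  using C.lead_mh_monic by blast

lemma lead_Pm2: "lead_coeff p = 1 \<Longrightarrow> coeff (map_poly const_ft p) (degree p) = 1"
  using lead_Pm by simp

lemma PS_Pm: "E.PS c (map_poly const_ft p)"
  by (simp add: E.PS_def coeff_map_poly const_ft_def regular_const[unfolded const_ft_def])

lemma RP_Pm: "RP (map_poly const_ft p)"
  by (simp add: RP_def PS_Pm)

lemma ev_Pm[simp]: "map_poly (eval_at c) (map_poly const_ft p) = p"
  by (rule poly_eqI) (simp add: E.coeff_mh coeff_map_poly const_ft_def eval_const[unfolded const_ft_def])

lemma mon_Pm: "mon ps \<Longrightarrow> mon (Pm ps)"
  by (auto simp: mon_def lead_Pm2)

lemma tp_Pm_const:
  assumes "mon ps" "y \<in> torus_points ps"
  shows "Pm y \<in> torus_points (Pm ps)"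
proof -
  have n: "\<And>j. j < length ps \<Longrightarrow> alg_norm (map_poly const_ft (ps!j)) (map_poly const_ft (y!j))
      = const_ft (alg_norm (ps!j) (y!j))"
    using C.h_norm[of "ps!_" "y!_"] assms(1) by (simp add: C.PS_def mon_def)
  have "(\<Prod>j<length ps. alg_norm (Pm ps ! j) (Pm y ! j)) = (\<Prod>j<length ps. const_ft (alg_norm (ps!j) (y!j)))"
    using assms(2) n by (intro prod.cong) (auto simp: torus_points_def)
  also have "\<dots> = const_ft (\<Prod>j<length ps. alg_norm (ps!j) (y!j))"
    using C.Sprod[of "{..<length ps}" "\<lambda>j. alg_norm (ps!j) (y!j)"] by simp
  also have "\<dots> = 1" using assms(2) C.h1 by (simp add: torus_points_def)
  finally show ?thesis using assms(2) by (simp add: torus_points_def)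
qed

lemma norm_ev:
  assumes "lead_coeff p = 1" "E.PS c f"
  shows "regular_at c (alg_norm (map_poly const_ft p) f) \<and>
         eval_at c (alg_norm (map_poly const_ft p) f) = alg_norm p (map_poly (eval_at c) f)"
  using E.h_norm[OF PS_Pm lead_Pm[OF assms(1)] assms(2)] by simp

lemma RP_PS: "RP f \<Longrightarrow> c = 0 \<or> c = 1 \<Longrightarrow> E.PS c f"
  by (auto simp: RP_def)

lemma RP_iff: "RP f \<longleftrightarrow> (\<forall>c. c = 0 \<or> c = 1 \<longrightarrow> E.PS c f)"
  by (auto simp: RP_def)

lemma Ev_tp:
  assumes m: "mon ps" and f: "RPath ps f" and c: "c = 0 \<or> c = 1"
  shows "Ev c f \<in> torus_points ps"
proof -
  have len: "length f = length ps" using f by (simp add: RPath_def torus_points_def)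
  have PSf: "\<And>j. j < length ps \<Longrightarrow> E.PS c (f!j)"
    using f len RP_PS[OF _ c] by (simp add: RPath_def)
  have deg: "\<And>j. j < length ps \<Longrightarrow> degree (Ev c f ! j) < degree (ps!j)"
  proof -
    fix j assume j: "j < length ps"
    have "degree (Ev c f ! j) \<le> degree (f!j)" using j len by (simp add: Ev_def E.degree_mh_le)
    also have "degree (f!j) < degree (Pm ps ! j)" using f j by (simp add: RPath_def torus_points_def)
    finally show "degree (Ev c f ! j) < degree (ps!j)" using j by simp
  qed
  have nj: "\<And>j. j < length ps \<Longrightarrow> regular_at c (alg_norm (Pm ps ! j) (f!j)) \<and>
      eval_at c (alg_norm (Pm ps ! j) (f!j)) = alg_norm (ps!j) (Ev c f ! j)"
  proof -
    fix j assume j: "j < length ps"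
    have "lead_coeff (ps!j) = 1" using m j by (simp add: mon_def)
    from norm_ev[OF this PSf[OF j]]
    show "regular_at c (alg_norm (Pm ps ! j) (f!j)) \<and>
      eval_at c (alg_norm (Pm ps ! j) (f!j)) = alg_norm (ps!j) (Ev c f ! j)"
      using j len by (simp add: Ev_def)
  qed
  have "(\<Prod>j<length ps. alg_norm (ps!j) (Ev c f ! j)) = (\<Prod>j<length ps. eval_at c (alg_norm (Pm ps ! j) (f!j)))"
    using nj by simp
  also have "\<dots> = eval_at c (\<Prod>j<length ps. alg_norm (Pm ps ! j) (f!j))"
    using E.Sprod[of "{..<length ps}" "\<lambda>j. alg_norm (Pm ps ! j) (f!j)" c] nj by simp
  also have "\<dots> = 1" using f E.h1 by (simp add: RPath_def torus_points_def)
  finally show ?thesis using deg len by (simp add: torus_points_def Ev_def)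
qed

lemma link_of_path:
  assumes m: "mon ps" and f: "RPath ps f"
  shows "R_link ps (Ev 0 f) (Ev 1 f)"
proof -
  have "\<forall>j<length f. \<forall>k. regular_at 0 (coeff (f!j) k) \<and> regular_at 1 (coeff (f!j) k)"
    using f by (simp add: RPath_def RP_def E_PS_iff)
  then show ?thesis using Ev_tp[OF m f] f unfolding R_link_def
    by (auto simp: RPath_def Ev_def)
qed

lemma path_of_link:
  assumes "R_link ps x0 x1"
  obtains f where "RPath ps f" "Ev 0 f = x0" "Ev 1 f = x1" "x0 \<in> torus_points ps" "x1 \<in> torus_points ps"
  using assms unfolding R_link_def RPath_def RP_def E_PS_iff Ev_def by blast

lemma equivclp_map:
  assumes "\<And>a b. R a b \<Longrightarrow> R' (g a) (g b)" and "equivclp R x y"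
  shows "equivclp R' (g x) (g y)"
  using assms(2)
proof (induction rule: equivclp_induct)
  case base then show ?case by simp
next
  case (step y z)
  then show ?case using assms(1) equivclp_into_equivclp by metis
qed

definition tmul :: "'b::field poly list \<Rightarrow> 'b poly list \<Rightarrow> 'b poly list \<Rightarrow> 'b poly list" where
  "tmul ps x y = map (\<lambda>j. (x!j * y!j) mod (ps!j)) [0..<length ps]"

lemma tmul_Nil[simp]: "tmul [] x y = []" by (simp add: tmul_def)

lemma tmul_Cons[simp]: "tmul (p # ps) (x # xs) (y # ys) = ((x * y) mod p) # tmul ps xs ys"
  by (simp add: tmul_def map_upt_Suc del: upt_Suc)

lemma tmul_length[simp]: "length (tmul ps x y) = length ps" by (simp add: tmul_def)

lemma tmul_nth[simp]: "j < length ps \<Longrightarrow> tmul ps x y ! j = (x!j * y!j) mod (ps!j)"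
  by (simp add: tmul_def)

lemma tg_mult: "monoid.mult (torus_group ps) x y = tmul ps x y" by (simp add: tmul_def)

lemma translate_link:
  assumes m: "mon ps" and l: "R_link ps x0 x1" and y: "y \<in> torus_points ps"
  shows "R_link ps (tmul ps x0 y) (tmul ps x1 y)"
proof -
  obtain f where f: "RPath ps f" and f0: "Ev 0 f = x0" and f1: "Ev 1 f = x1" using path_of_link[OF l] by blast
  have len: "length f = length ps" using f by (simp add: RPath_def torus_points_def)
  have ly: "length y = length ps" using y by (simp add: torus_points_def)
  define f' where "f' = tmul (Pm ps) f (Pm y)"
  have tp: "f' \<in> torus_points (Pm ps)" unfolding f'_def tmul_def
    using tp_mult_closed[of "Pm ps" f "Pm y"] mon_dpos[OF mon_Pm[OF m]] f tp_Pm_const[OF m y]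
    by (simp add: RPath_def)
  have key: "E.PS c (f'!j) \<and> map_poly (eval_at c) (f'!j) = (Ev c f ! j * y!j) mod (ps!j)"
    if j: "j < length ps" and c: "c = 0 \<or> c = 1" for j c
  proof -
    have PSf: "E.PS c (f!j)" using f len j RP_PS[OF _ c] by (simp add: RPath_def)
    have PSy: "E.PS c (map_poly const_ft (y!j))" by (rule PS_Pm)
    have lp: "lead_coeff (ps!j) = 1" using m j by (simp add: mon_def)
    have "E.PS c ((f!j * map_poly const_ft (y!j)) mod map_poly const_ft (ps!j)) \<and>
      map_poly (eval_at c) ((f!j * map_poly const_ft (y!j)) mod map_poly const_ft (ps!j)) =
      map_poly (eval_at c) (f!j * map_poly const_ft (y!j)) mod (ps!j)"
      using E.mh_mod[OF PS_Pm lead_Pm[OF lp] E.PS_mult[OF PSf PSy]] by simp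
    then show ?thesis using j len ly E.mh_mult[OF PSf PSy] by (simp add: f'_def Ev_def)
  qed
  have "RPath ps f'" using tp key by (simp add: RPath_def RP_iff f'_def)
  moreover have "Ev c f' = tmul ps (Ev c f) y" if "c = 0 \<or> c = 1" for c
    using key[OF _ that] by (intro nth_equalityI) (simp_all add: Ev_def f'_def)
  ultimately show ?thesis using link_of_path[OF m] f0 f1 by metis
qed

lemma translate_equiv:
  assumes m: "mon ps" and e: "R_equiv ps x0 x1" and y: "y \<in> torus_points ps"
  shows "R_equiv ps (tmul ps x0 y) (tmul ps x1 y)"
  using equivclp_map[of "R_link ps" "R_link ps" "\<lambda>u. tmul ps u y"] translate_link[OF m _ y] e
  unfolding R_equiv_def by blast

lemma R_trivial_subgroup:
  assumes m: "mon ps"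
  shows "subgroup (R_trivial ps) (torus_group ps)"
proof -
  interpret G: comm_group "torus_group ps" using torus_comm_group[OF mon_dpos[OF m]] .
  let ?one = "replicate (length ps) 1"
  show ?thesis
  proof (rule G.subgroupI)
    show "R_trivial ps \<subseteq> carrier (torus_group ps)" by (auto simp: R_trivial_def)
    show "R_trivial ps \<noteq> {}"
      using tp_one[OF mon_dpos[OF m]] by (auto simp: R_trivial_def R_equiv_def)
  next
    fix a assume a: "a \<in> R_trivial ps"
    then have ac: "a \<in> carrier (torus_group ps)" by (simp add: R_trivial_def)
    have "R_equiv ps (tmul ps a (inv\<^bsub>torus_group ps\<^esub> a)) (tmul ps ?one (inv\<^bsub>torus_group ps\<^esub> a))"
      using translate_equiv[OF m _ G.inv_closed[OF ac, simplified]] a by (simp add: R_trivial_def)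
    then have "R_equiv ps ?one (inv\<^bsub>torus_group ps\<^esub> a)"
      using G.r_inv[OF ac] G.l_one[OF G.inv_closed[OF ac]] by (simp add: tmul_def)
    then show "inv\<^bsub>torus_group ps\<^esub> a \<in> R_trivial ps"
      using G.inv_closed[OF ac] by (simp add: R_trivial_def R_equiv_def equivclp_sym)
  next
    fix a b assume a: "a \<in> R_trivial ps" and b: "b \<in> R_trivial ps"
    then have ac: "a \<in> carrier (torus_group ps)" and bc: "b \<in> carrier (torus_group ps)"
      by (auto simp: R_trivial_def)
    have "R_equiv ps (tmul ps a b) (tmul ps ?one b)"
      using translate_equiv[OF m _ bc[simplified]] a by (simp add: R_trivial_def)
    then have "R_equiv ps (tmul ps a b) b" using G.l_one[OF bc] by (simp add: tmul_def)
    then have "R_equiv ps (tmul ps a b) ?one" using b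
      by (auto simp: R_trivial_def R_equiv_def intro: equivclp_trans)
    then show "a \<otimes>\<^bsub>torus_group ps\<^esub> b \<in> R_trivial ps"
      using G.m_closed[OF ac bc] by (simp add: R_trivial_def tmul_def)
  qed
qed

lemma R_trivial_normal:
  assumes m: "mon ps"
  shows "R_trivial ps \<lhd> torus_group ps"
  using comm_group.subgroup_imp_normal[OF torus_comm_group[OF mon_dpos[OF m]] R_trivial_subgroup[OF m]] .

lemma torus_mod_R_group:
  assumes m: "mon ps" shows "group (torus_mod_R ps)"
  unfolding torus_mod_R_def using normal.factorgroup_is_group[OF R_trivial_normal[OF m]] .

lemma quot_iso:
  assumes G: "group G" and N: "N \<lhd> H" and hom: "\<phi> \<in> hom G H"
    and surj: "\<phi> ` carrier G = carrier H" and M: "M = {x \<in> carrier G. \<phi> x \<in> N}"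
  shows "G Mod M \<cong> H Mod N"
proof -
  interpret N: normal N H by (rule N)
  let ?h = "\<lambda>x. N #>\<^bsub>H\<^esub> \<phi> x"
  have phc: "\<And>x. x \<in> carrier G \<Longrightarrow> \<phi> x \<in> carrier H" using hom by (auto simp: hom_def)
  have hh: "?h \<in> hom G (H Mod N)"
  proof (rule homI)
    fix x assume "x \<in> carrier G"
    then show "?h x \<in> carrier (H Mod N)"
      using phc N.rcosetsI N.subset by (simp add: FactGroup_def)
  next
    fix x y assume x: "x \<in> carrier G" and y: "y \<in> carrier G"
    have "\<phi> (x \<otimes>\<^bsub>G\<^esub> y) = \<phi> x \<otimes>\<^bsub>H\<^esub> \<phi> y" using hom x y by (simp add: hom_def)
    then show "?h (x \<otimes>\<^bsub>G\<^esub> y) = ?h x \<otimes>\<^bsub>H Mod N\<^esub> ?h y"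
      using N.rcos_sum[OF phc[OF x] phc[OF y]] by (simp add: FactGroup_def)
  qed
  interpret gh: group_hom G "H Mod N" ?h
    using G N.factorgroup_is_group hh by (simp add: group_hom_def group_hom_axioms_def)
  have im: "?h ` carrier G = carrier (H Mod N)"
  proof
    show "?h ` carrier G \<subseteq> carrier (H Mod N)" using hh by (auto simp: hom_def)
    show "carrier (H Mod N) \<subseteq> ?h ` carrier G"
    proof
      fix X assume "X \<in> carrier (H Mod N)"
      then obtain y where y: "y \<in> carrier H" "X = N #>\<^bsub>H\<^esub> y"
        by (auto simp: FactGroup_def RCOSETS_def)
      have "y \<in> \<phi> ` carrier G" using surj y by simp
      then obtain x where "x \<in> carrier G" "\<phi> x = y" by blast
      then show "X \<in> ?h ` carrier G" using y by auto
    qed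
  qed
  have ker: "kernel G (H Mod N) ?h = M"
  proof -
    have "\<And>y. y \<in> carrier H \<Longrightarrow> N #>\<^bsub>H\<^esub> y = N \<longleftrightarrow> y \<in> N"
    proof
      fix y assume y: "y \<in> carrier H" and e: "N #>\<^bsub>H\<^esub> y = N"
      show "y \<in> N" using N.rcos_self[OF y N.subgroup_axioms] e by simp
    next
      fix y assume y: "y \<in> N"
      show "N #>\<^bsub>H\<^esub> y = N" using N.rcos_const[OF N.is_group y] .
    qed
    then show ?thesis using phc by (auto simp: kernel_def M FactGroup_def)
  qed
  show ?thesis using gh.FactGroup_iso[OF im] ker by simp
qed

lemma tp_len: "x \<in> torus_points ps \<Longrightarrow> length x = length ps"
  by (simp add: torus_points_def)

lemma tp_Cons_iff:
  "(x0 # xs) \<in> torus_points (p # ps) \<longleftrightarrow>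
     degree x0 < degree p \<and> length xs = length ps \<and> (\<forall>j<length ps. degree (xs!j) < degree (ps!j)) \<and>
     alg_norm p x0 * (\<Prod>j<length ps. alg_norm (ps!j) (xs!j)) = 1"
proof -
  have e: "(\<Prod>j<length (p#ps). alg_norm ((p#ps)!j) ((x0#xs)!j)) = alg_norm p x0 * (\<Prod>j<length ps. alg_norm (ps!j) (xs!j))"
    by (simp only: length_Cons prod.lessThan_Suc_shift) simp
  show ?thesis unfolding torus_points_def mem_Collect_eq e by (simp add: All_less_Suc2) blast
qed

lemma mon_Cons_dup: "mon (p # qs) \<Longrightarrow> mon (p # p # qs)"
  by (simp add: mon_def)

lemma mon_set: "set qs = set ps \<Longrightarrow> mon ps \<Longrightarrow> mon qs"
  by (simp add: mon_def)

lemma tp_one_len: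
  assumes "dpos ps" shows "replicate (length ps) 1 \<in> torus_points ps"
  using tp_one[OF assms] .

lemma tmul_one_left:
  assumes "x \<in> torus_points ps" shows "tmul ps (replicate (length ps) 1) x = x"
  using assms by (intro nth_equalityI) (auto simp: torus_points_def mod_poly_less)

section \<open>Permutations\<close>

lemma tp_perm:
  fixes ps :: "'b::field poly list"
  assumes s: "\<sigma> permutes {..<length ps}" and x: "x \<in> torus_points ps"
  shows "permute_list \<sigma> x \<in> torus_points (permute_list \<sigma> ps)"
proof -
  have lx: "length x = length ps" using x by (simp add: torus_points_def)
  have s': "\<sigma> permutes {..<length x}" using s lx by simp
  have img: "\<And>j. j < length ps \<Longrightarrow> \<sigma> j < length ps" using permutes_in_image[OF s] by simp
  have "(\<Prod>j<length ps. alg_norm (permute_list \<sigma> ps ! j) (permute_list \<sigma> x ! j))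
      = (\<Prod>j<length ps. alg_norm (ps ! \<sigma> j) (x ! \<sigma> j))"
    using permute_list_nth[OF s] permute_list_nth[OF s'] lx by simp
  also have "\<dots> = (\<Prod>j<length ps. alg_norm (ps ! j) (x ! j))"
    using prod.permute[OF s, of "\<lambda>j. alg_norm (ps ! j) (x ! j)"] by (simp add: comp_def)
  also have "\<dots> = 1" using x by (simp add: torus_points_def)
  finally show ?thesis using x img permute_list_nth[OF s] permute_list_nth[OF s'] lx
    by (simp add: torus_points_def)
qed

lemma perm_inv_perm:
  assumes s: "\<sigma> permutes {..<length xs}"
  shows "permute_list (inv_into UNIV \<sigma>) (permute_list \<sigma> xs) = xs"
    and "permute_list \<sigma> (permute_list (inv_into UNIV \<sigma>) xs) = xs"
proof -
  have si: "inv_into UNIV \<sigma> permutes {..<length xs}" using permutes_inv[OF s] .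
  show "permute_list (inv_into UNIV \<sigma>) (permute_list \<sigma> xs) = xs"
  proof (rule nth_equalityI)
    fix j assume j: "j < length (permute_list (inv_into UNIV \<sigma>) (permute_list \<sigma> xs))"
    then have j': "j < length xs" by simp
    have ij: "inv_into UNIV \<sigma> j < length xs" using permutes_in_image[OF si] j' by simp
    have si': "inv_into UNIV \<sigma> permutes {..<length (permute_list \<sigma> xs)}" using si by simp
    have "permute_list (inv_into UNIV \<sigma>) (permute_list \<sigma> xs) ! j = permute_list \<sigma> xs ! (inv_into UNIV \<sigma> j)"
      using permute_list_nth[OF si'] j' by simp
    also have "\<dots> = xs ! \<sigma> (inv_into UNIV \<sigma> j)" using permute_list_nth[OF s ij] .
    also have "\<dots> = xs ! j" using permutes_inverses(1)[OF s] by simp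
    finally show "permute_list (inv_into UNIV \<sigma>) (permute_list \<sigma> xs) ! j = xs ! j" .
  qed simp
  show "permute_list \<sigma> (permute_list (inv_into UNIV \<sigma>) xs) = xs"
  proof (rule nth_equalityI)
    fix j assume j: "j < length (permute_list \<sigma> (permute_list (inv_into UNIV \<sigma>) xs))"
    then have j': "j < length xs" by simp
    have ij: "\<sigma> j < length xs" using permutes_in_image[OF s] j' by simp
    have s': "\<sigma> permutes {..<length (permute_list (inv_into UNIV \<sigma>) xs)}" using s by simp
    have "permute_list \<sigma> (permute_list (inv_into UNIV \<sigma>) xs) ! j = permute_list (inv_into UNIV \<sigma>) xs ! (\<sigma> j)"
      using permute_list_nth[OF s'] j' by simp
    also have "\<dots> = xs ! inv_into UNIV \<sigma> (\<sigma> j)" using permute_list_nth[OF si ij] .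
    also have "\<dots> = xs ! j" using permutes_inverses(2)[OF s] by simp
    finally show "permute_list \<sigma> (permute_list (inv_into UNIV \<sigma>) xs) ! j = xs ! j" .
  qed simp
qed

lemma mon_perm: "\<sigma> permutes {..<length ps} \<Longrightarrow> mon ps \<Longrightarrow> mon (permute_list \<sigma> ps)"
  by (simp add: mon_def set_mset_mset[symmetric] mset_permute_list del: set_mset_mset)

lemma perm_link:
  assumes m: "mon ps" and s: "\<sigma> permutes {..<length ps}" and l: "R_link ps a b"
  shows "R_link (permute_list \<sigma> ps) (permute_list \<sigma> a) (permute_list \<sigma> b)"
proof -
  obtain f where f: "RPath ps f" and f0: "Ev 0 f = a" and f1: "Ev 1 f = b" using path_of_link[OF l] by blast
  have lf: "length f = length ps" using f by (simp add: RPath_def torus_points_def)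
  have sPm: "\<sigma> permutes {..<length (Pm ps)}" using s by simp
  have sf: "\<sigma> permutes {..<length f}" using s lf by simp
  have "permute_list \<sigma> f \<in> torus_points (permute_list \<sigma> (Pm ps))"
    using tp_perm[OF sPm] f by (simp add: RPath_def)
  moreover have "permute_list \<sigma> (Pm ps) = Pm (permute_list \<sigma> ps)" using permute_list_map[OF s] .
  ultimately have tp: "permute_list \<sigma> f \<in> torus_points (Pm (permute_list \<sigma> ps))" by simp
  have "\<forall>j<length f. RP (permute_list \<sigma> f ! j)"
    using f permute_list_nth[OF sf] permutes_in_image[OF sf] by (simp add: RPath_def)
  then have "RPath (permute_list \<sigma> ps) (permute_list \<sigma> f)" using tp by (simp add: RPath_def)
  moreover have "\<And>c. Ev c (permute_list \<sigma> f) = permute_list \<sigma> (Ev c f)"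
    unfolding Ev_def by (simp add: permute_list_map[OF sf])
  ultimately show ?thesis using link_of_path[OF mon_perm[OF s m]] f0 f1 by metis
qed

lemma perm_equiv:
  assumes m: "mon ps" and s: "\<sigma> permutes {..<length ps}" and e: "R_equiv ps a b"
  shows "R_equiv (permute_list \<sigma> ps) (permute_list \<sigma> a) (permute_list \<sigma> b)"
  using equivclp_map[of "R_link ps" "R_link (permute_list \<sigma> ps)" "permute_list \<sigma>"] perm_link[OF m s] e
  unfolding R_equiv_def by blast

lemma permute_replicate: assumes s: "\<sigma> permutes {..<n}" shows "permute_list \<sigma> (replicate n x) = replicate n x"
proof (rule nth_equalityI)
  fix i assume "i < length (permute_list \<sigma> (replicate n x))"
  then have i: "i < n" by simp
  have "\<sigma> i < n" using permutes_in_image[OF s, of i] i by simp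
  then show "permute_list \<sigma> (replicate n x) ! i = replicate n x ! i"
    using i s by (simp add: permute_list_nth)
qed simp

lemma group_torus: "mon ps \<Longrightarrow> group (torus_group ps)"
  using torus_comm_group[OF mon_dpos] comm_group_def by blast

lemma perm_iso:
  assumes m: "mon ps" and s: "\<sigma> permutes {..<length ps}"
  shows "torus_mod_R ps \<cong> torus_mod_R (permute_list \<sigma> ps)"
proof -
  let ?qs = "permute_list \<sigma> ps"
  have mq: "mon ?qs" using mon_perm[OF s m] .
  have si: "inv_into UNIV \<sigma> permutes {..<length ?qs}" using permutes_inv[OF s] by simp
  have hom: "permute_list \<sigma> \<in> hom (torus_group ps) (torus_group ?qs)"
  proof (rule homI)
    fix x assume "x \<in> carrier (torus_group ps)"
    then show "permute_list \<sigma> x \<in> carrier (torus_group ?qs)" using tp_perm[OF s] by simp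
  next
    fix x y assume x: "x \<in> carrier (torus_group ps)" and y: "y \<in> carrier (torus_group ps)"
    have lx: "length x = length ps" "length y = length ps" using x y by (auto simp: torus_points_def)
    have sx: "\<sigma> permutes {..<length x}" "\<sigma> permutes {..<length y}" using s lx by auto
    have sm: "\<sigma> permutes {..<length (tmul ps x y)}" using s by simp
    show "permute_list \<sigma> (x \<otimes>\<^bsub>torus_group ps\<^esub> y) =
        permute_list \<sigma> x \<otimes>\<^bsub>torus_group ?qs\<^esub> permute_list \<sigma> y"
      unfolding tg_mult
    proof (rule nth_equalityI)
      fix j assume "j < length (permute_list \<sigma> (tmul ps x y))"
      then have j: "j < length ps" by simp
      have "\<sigma> j < length ps" using permutes_in_image[OF s] j by simp
      then show "permute_list \<sigma> (tmul ps x y) ! j = tmul ?qs (permute_list \<sigma> x) (permute_list \<sigma> y) ! j"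
        using j permute_list_nth[OF s] permute_list_nth[OF sx(1)] permute_list_nth[OF sx(2)]
          permute_list_nth[OF sm] lx by simp
    qed simp
  qed
  have surj: "permute_list \<sigma> ` carrier (torus_group ps) = carrier (torus_group ?qs)"
  proof
    show "permute_list \<sigma> ` carrier (torus_group ps) \<subseteq> carrier (torus_group ?qs)"
      using tp_perm[OF s] by auto
    show "carrier (torus_group ?qs) \<subseteq> permute_list \<sigma> ` carrier (torus_group ps)"
    proof
      fix z assume z: "z \<in> carrier (torus_group ?qs)"
      then have lz: "length z = length ps" by (simp add: torus_points_def)
      have "permute_list (inv_into UNIV \<sigma>) z \<in> torus_points (permute_list (inv_into UNIV \<sigma>) ?qs)"
        using tp_perm[OF si] z by simp
      then have "permute_list (inv_into UNIV \<sigma>) z \<in> carrier (torus_group ps)"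
        using perm_inv_perm(1)[OF s] by simp
      moreover have "z = permute_list \<sigma> (permute_list (inv_into UNIV \<sigma>) z)"
        using perm_inv_perm(2)[of \<sigma> z] s lz by simp
      ultimately show "z \<in> permute_list \<sigma> ` carrier (torus_group ps)" by blast
    qed
  qed
  have M: "R_trivial ps = {x \<in> carrier (torus_group ps). permute_list \<sigma> x \<in> R_trivial ?qs}"
  proof (rule equalityI; rule subsetI)
    fix x assume "x \<in> R_trivial ps"
    then have x: "x \<in> torus_points ps" "R_equiv ps x (replicate (length ps) 1)" by (auto simp: R_trivial_def)
    have "R_equiv ?qs (permute_list \<sigma> x) (replicate (length ps) 1)"
      using perm_equiv[OF m s x(2)] permute_replicate[OF s] by metis
    then show "x \<in> {x \<in> carrier (torus_group ps). permute_list \<sigma> x \<in> R_trivial ?qs}"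
      using x tp_perm[OF s x(1)] by (simp add: R_trivial_def)
  next
    fix x assume "x \<in> {x \<in> carrier (torus_group ps). permute_list \<sigma> x \<in> R_trivial ?qs}"
    then have x: "x \<in> torus_points ps" "R_equiv ?qs (permute_list \<sigma> x) (replicate (length ps) 1)"
      by (auto simp: R_trivial_def)
    have lx: "length x = length ps" using x by (simp add: torus_points_def)
    have "R_equiv (permute_list (inv_into UNIV \<sigma>) ?qs) (permute_list (inv_into UNIV \<sigma>) (permute_list \<sigma> x))
        (permute_list (inv_into UNIV \<sigma>) (replicate (length ps) 1))"
      using perm_equiv[OF mq si x(2)] .
    then have "R_equiv ps x (permute_list (inv_into UNIV \<sigma>) (replicate (length ps) 1))"
      using perm_inv_perm(1)[OF s] perm_inv_perm(1)[of \<sigma> x] s lx by simp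
    moreover have "permute_list (inv_into UNIV \<sigma>) (replicate (length ps) (1::'a poly)) = replicate (length ps) 1"
      using permute_replicate si by simp
    ultimately have "R_equiv ps x (replicate (length ps) 1)" by simp
    then show "x \<in> R_trivial ps" using x by (simp add: R_trivial_def)
  qed
  show ?thesis unfolding torus_mod_R_def
    by (rule quot_iso[OF group_torus[OF m] R_trivial_normal[OF mq] hom surj M])
qed

definition dupm :: "'b::field poly \<Rightarrow> 'b poly list \<Rightarrow> 'b poly list" where
  "dupm p x = ((hd x * hd (tl x)) mod p) # tl (tl x)"

definition dups :: "'b::field poly list \<Rightarrow> 'b poly list" where
  "dups y = hd y # 1 # tl y"

lemma dupm_simp[simp]: "dupm p (x0 # x1 # xs) = ((x0 * x1) mod p) # xs"
  by (simp add: dupm_def)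

lemma dups_simp[simp]: "dups (y0 # ys) = y0 # 1 # ys"
  by (simp add: dups_def)

lemma tp_cases2:
  assumes "x \<in> torus_points (p # p # qs)"
  obtains x0 x1 xs where "x = x0 # x1 # xs"
  using assms by (cases x; cases "tl x") (auto simp: torus_points_def)

lemma tp_cases1:
  assumes "x \<in> torus_points (p # qs)"
  obtains x0 xs where "x = x0 # xs"
  using assms by (cases x) (auto simp: torus_points_def)

lemma tp_Cons2_iff:
  "(x0 # x1 # xs) \<in> torus_points (p0 # p1 # ps) \<longleftrightarrow>
     degree x0 < degree p0 \<and> degree x1 < degree p1 \<and> length xs = length ps \<and>
     (\<forall>j<length ps. degree (xs!j) < degree (ps!j)) \<and>
     alg_norm p0 x0 * (alg_norm p1 x1 * (\<Prod>j<length ps. alg_norm (ps!j) (xs!j))) = 1"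
proof -
  have e: "(\<Prod>j<length (p0#p1#ps). alg_norm ((p0#p1#ps)!j) ((x0#x1#xs)!j))
      = alg_norm p0 x0 * (alg_norm p1 x1 * (\<Prod>j<length ps. alg_norm (ps!j) (xs!j)))"
    by (simp only: length_Cons prod.lessThan_Suc_shift) simp
  show ?thesis unfolding torus_points_def mem_Collect_eq e by (simp add: All_less_Suc2) blast
qed

lemma dup_tp:
  fixes p :: "'b::field poly"
  assumes p: "degree p > 0" and x: "x0 # x1 # xs \<in> torus_points (p # p # qs)"
  shows "((x0 * x1) mod p) # xs \<in> torus_points (p # qs)"
proof -
  have "p \<noteq> 0" using p by auto
  then have "alg_norm p ((x0 * x1) mod p) = alg_norm p x0 * alg_norm p x1" by (simp add: norm_mod norm_mult)
  moreover note x' = x[unfolded tp_Cons2_iff]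
  ultimately show ?thesis using p unfolding tp_Cons_iff by (simp add: deg_mod_lt mult.assoc)
qed

lemma dups_tp:
  fixes p :: "'b::field poly"
  assumes p: "degree p > 0" and y: "y0 # ys \<in> torus_points (p # qs)"
  shows "y0 # 1 # ys \<in> torus_points (p # p # qs)"
  using y[unfolded tp_Cons_iff] p unfolding tp_Cons2_iff by (simp add: norm_one)

lemma Ev_Cons[simp]: "Ev c (f # fs) = map_poly (eval_at c) f # Ev c fs"
  by (simp add: Ev_def)

lemma RPath_Cons_RP: "RPath ps f \<Longrightarrow> j < length f \<Longrightarrow> RP (f!j)"
  by (simp add: RPath_def)

lemma dup_link:
  assumes m: "mon (p # qs)" and l: "R_link (p # p # qs) a b"
  shows "R_link (p # qs) (dupm p a) (dupm p b)"
proof -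
  obtain f where f: "RPath (p # p # qs) f" and f0: "Ev 0 f = a" and f1: "Ev 1 f = b"
    using path_of_link[OF l] by blast
  have ftp: "f \<in> torus_points (Pm (p # p # qs))" using f by (simp add: RPath_def)
  then obtain f0' f1' fs where fe: "f = f0' # f1' # fs" using tp_cases2 by (metis list.simps(9))
  have mp: "lead_coeff p = 1" "degree p > 0" using m by (auto simp: mon_def)
  let ?P = "map_poly const_ft p"
  have RPall: "\<forall>j<length f. RP (f!j)" using f by (simp add: RPath_def)
  have RP3: "\<forall>j<length fs. RP (fs!j)"
  proof (intro allI impI)
    fix j assume "j < length fs"
    then have "Suc (Suc j) < length f" using fe by simp
    then have "RP (f ! Suc (Suc j))" using RPall by blast
    then show "RP (fs ! j)" by (simp add: fe)
  qed
  have RPs: "RP f0'" "RP f1'" "\<forall>j<length fs. RP (fs!j)"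
    using RPall fe RP3 by auto
  define f' where "f' = ((f0' * f1') mod ?P) # fs"
  have tp': "f' \<in> torus_points (Pm (p # qs))"
    unfolding f'_def using dup_tp[of ?P f0' f1' fs "Pm qs"] ftp fe mp by simp
  have key: "E.PS c ((f0' * f1') mod ?P) \<and> map_poly (eval_at c) ((f0' * f1') mod ?P)
      = (map_poly (eval_at c) f0' * map_poly (eval_at c) f1') mod p" if c: "c = 0 \<or> c = 1" for c
  proof -
    have a: "E.PS c f0'" "E.PS c f1'" using RPs RP_PS[OF _ c] by auto
    show ?thesis using E.mh_mod[OF PS_Pm lead_Pm[OF mp(1)] E.PS_mult[OF a]] E.mh_mult[OF a] by simp
  qed
  have "RPath (p # qs) f'" using tp' key RPs
    by (auto simp: RPath_def f'_def RP_iff nth_Cons split: nat.split)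
  moreover have "Ev c f' = dupm p (Ev c f)" if "c = 0 \<or> c = 1" for c
    using key[OF that] by (simp add: f'_def fe)
  ultimately show ?thesis using link_of_path[OF m] f0 f1 by metis
qed

lemma dups_link:
  assumes m: "mon (p # qs)" and l: "R_link (p # qs) a b"
  shows "R_link (p # p # qs) (dups a) (dups b)"
proof -
  obtain f where f: "RPath (p # qs) f" and f0: "Ev 0 f = a" and f1: "Ev 1 f = b"
    using path_of_link[OF l] by blast
  have ftp: "f \<in> torus_points (Pm (p # qs))" using f by (simp add: RPath_def)
  then obtain g gs where fe: "f = g # gs" using tp_cases1 by (metis list.simps(9))
  have mp: "lead_coeff p = 1" "degree p > 0" using m by (auto simp: mon_def)
  define f' where "f' = g # 1 # gs"
  have tp': "f' \<in> torus_points (Pm (p # p # qs))"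
    unfolding f'_def using dups_tp[of "map_poly const_ft p" g gs "Pm qs"] ftp fe mp by simp
  have "RP 1" by (simp add: RP_iff E.PS_1)
  then have "RPath (p # p # qs) f'" using tp' f fe
    by (auto simp: RPath_def f'_def nth_Cons split: nat.split)
  moreover have "Ev c f' = dups (Ev c f)" for c
    by (simp add: f'_def fe E.mh_1)
  ultimately show ?thesis using link_of_path[OF mon_Cons_dup[OF m]] f0 f1 by metis
qed

lemma T_props: "Fract [:0, 1:] 1 \<in> {q. regular_at c q} \<and> eval_at c (Fract [:0, 1:] 1) = (c::'a::field)"
  by (simp add: regular_Fract eval_Fract)

lemma replicate_Suc2: "replicate (length qs + 2) x = x # x # replicate (length qs) x"
  by (simp add: numeral_2_eq_2)

lemma basic_link:
  fixes p a :: "'a::field poly"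
  assumes m: "mon (p # qs)" and a: "degree a < degree p" "alg_norm p a \<noteq> 0" and k: "k \<le> degree p"
  shows "R_link (p # p # qs) (replicate (length qs + 2) 1)
     (smult (inverse (alg_norm p a)) (a ^ (degree p - k) mod p) # (a ^ k mod p) # replicate (length qs) 1)"
proof -
  let ?n = "degree p"
  have mp: "lead_coeff p = 1" "degree p > 0" using m by (auto simp: mon_def)
  have mq: "\<forall>q\<in>set qs. degree q > 0" using m by (auto simp: mon_def)
  define T :: "'a poly fract" where "T = Fract [:0, 1:] 1"
  have T: "\<And>c. T \<in> {q. regular_at c q} \<and> eval_at c T = c" unfolding T_def by (rule T_props)
  define A where "A = map_poly const_ft a"
  define P where "P = map_poly const_ft p"
  have PSP: "\<And>c. E.PS c P" unfolding P_def by (rule PS_Pm)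
  have lP: "lead_coeff P = 1" unfolding P_def using lead_Pm[OF mp(1)] .
  have dP: "degree P = ?n" unfolding P_def by simp
  have Pnz: "P \<noteq> 0" using dP mp by auto
  define g where "g = [:1 - T:] + smult T A"
  have PSg: "\<And>c. E.PS c g" unfolding g_def A_def using T
    by (intro E.PS_add E.PS_smult E.PS_const E.Sdiff E.S1 PS_Pm) auto
  have evg: "\<And>c. map_poly (eval_at c) g = smult (1 - c) 1 + smult c a"
  proof -
    fix c
    have t1: "1 - T \<in> {q. regular_at c q}" using T E.Sdiff E.S1 by blast
    have "map_poly (eval_at c) g = map_poly (eval_at c) [:1 - T:] + map_poly (eval_at c) (smult T A)"
      unfolding g_def A_def using t1 T by (intro E.mh_add E.PS_smult E.PS_const PS_Pm) auto
    also have "\<dots> = [:eval_at c (1 - T):] + smult (eval_at c T) a"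
      using E.mh_const E.mh_smult[of T c A] T by (simp add: A_def PS_Pm)
    also have "eval_at c (1 - T) = 1 - c" using E.hdiff[OF E.S1 conjunct1[OF T]] E.h1 T by simp
    finally show "map_poly (eval_at c) g = smult (1 - c) 1 + smult c a" using T by (simp add: one_pCons)
  qed
  have evg0: "map_poly (eval_at 0) g = 1" using evg[of 0] by simp
  have evg1: "map_poly (eval_at 1) g = a" using evg[of 1] by simp
  define D where "D = alg_norm P g"
  have D: "\<And>c. regular_at c D \<and> eval_at c D = alg_norm p (map_poly (eval_at c) g)"
    unfolding D_def P_def using norm_ev[OF mp(1) PSg] .
  have D0: "eval_at 0 D = 1" using D[of 0] evg0 norm_one by simp
  have D1: "eval_at 1 D = alg_norm p a" using D[of 1] evg1 by simp
  have Dnz: "D \<noteq> 0"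
  proof
    assume "D = 0" then have "eval_at 0 D = 0" using E.h0 by simp
    then show False using D0 by simp
  qed
  have iD: "regular_at c (inverse D) \<and> eval_at c (inverse D) = inverse (eval_at c D)" if c: "c = 0 \<or> c = 1" for c
    using regular_inverse[of c D] D c D0 D1 a(2) by auto
  have modg: "\<And>c j. E.PS c (g ^ j mod P) \<and> map_poly (eval_at c) (g ^ j mod P) = (map_poly (eval_at c) g) ^ j mod p"
  proof -
    fix c j
    have "map_poly (eval_at c) P = p" unfolding P_def by simp
    then show "E.PS c (g ^ j mod P) \<and> map_poly (eval_at c) (g ^ j mod P) = (map_poly (eval_at c) g) ^ j mod p"
      using E.mh_mod[OF PSP lP E.PS_power[OF PSg]] E.mh_power[OF PSg] by simp
  qed
  define u where "u = smult (inverse D) (g ^ (?n - k) mod P)"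
  define v where "v = g ^ k mod P"
  define f where "f = u # v # replicate (length qs) (1 :: 'a poly fract poly)"
  have nu: "alg_norm P u = inverse D ^ ?n * D ^ (?n - k)"
    unfolding u_def D_def using dP by (simp add: norm_smult norm_mod norm_power[OF Pnz])
  have nv: "alg_norm P v = D ^ k" unfolding v_def D_def by (simp add: norm_mod norm_power[OF Pnz])
  have "inverse D ^ ?n * D ^ (?n - k) * D ^ k = inverse D ^ ?n * D ^ ?n"
    using k by (simp add: mult.assoc power_add[symmetric])
  also have "\<dots> = 1" using Dnz by (simp add: power_mult_distrib[symmetric])
  finally have nuv: "alg_norm P u * (alg_norm P v * (\<Prod>j<length qs. alg_norm (Pm qs ! j) (replicate (length qs) 1 ! j))) = 1"
    using nu nv by (simp add: norm_one mult.assoc)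
  have du: "degree u < ?n" unfolding u_def
    using degree_smult_le[of "inverse D" "g ^ (?n - k) mod P"] deg_mod_lt[of P] dP mp by fastforce
  have dv: "degree v < ?n" unfolding v_def using deg_mod_lt[of P] dP mp by fastforce
  have "f \<in> torus_points (Pm (p # p # qs))"
    unfolding f_def tp_Cons2_iff list.map(2) P_def[symmetric] using nuv du dv mq dP by simp
  moreover have "\<forall>j<length f. RP (f!j)"
  proof -
    have "RP u" unfolding RP_iff u_def using iD modg by (auto intro: E.PS_smult)
    moreover have "RP v" unfolding RP_iff v_def using modg by auto
    moreover have "RP 1" by (simp add: RP_iff E.PS_1)
    ultimately show ?thesis by (auto simp: f_def nth_Cons split: nat.split)
  qed
  ultimately have path: "RPath (p # p # qs) f" by (simp add: RPath_def)
  have evrep: "\<And>c. Ev c (replicate (length qs) 1) = replicate (length qs) 1"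
    by (simp add: Ev_def E.mh_1)
  have one_mod: "(1::'a poly) mod p = 1" using mp by (simp add: mod_poly_less)
  have "Ev 0 f = replicate (length qs + 2) 1"
  proof -
    have "map_poly (eval_at 0) u = 1"
      unfolding u_def using E.mh_smult[of "inverse D" 0 "g ^ (?n - k) mod P"] iD[of 0] modg[of 0] evg0 D0 one_mod
      by simp
    moreover have "map_poly (eval_at 0) v = 1" unfolding v_def using modg[of 0] evg0 one_mod by simp
    ultimately show ?thesis by (simp add: f_def evrep replicate_Suc2)
  qed
  moreover have "Ev 1 f = smult (inverse (alg_norm p a)) (a ^ (?n - k) mod p) # (a ^ k mod p) # replicate (length qs) 1"
  proof -
    have "map_poly (eval_at 1) u = smult (inverse (alg_norm p a)) (a ^ (?n - k) mod p)"
      unfolding u_def using E.mh_smult[of "inverse D" 1 "g ^ (?n - k) mod P"] iD[of 1] modg[of 1] evg1 D1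
      by simp
    moreover have "map_poly (eval_at 1) v = a ^ k mod p" unfolding v_def using modg[of 1] evg1 by simp
    ultimately show ?thesis by (simp add: f_def evrep)
  qed
  ultimately show ?thesis using link_of_path[OF mon_Cons_dup[OF m] path] by metis
qed

lemma tmul_one_gen:
  assumes "length xs = length qs" "\<forall>j<length qs. degree (xs!j) < degree (qs!j)"
  shows "tmul qs (replicate (length qs) 1) xs = xs"
  using assms by (intro nth_equalityI) (auto simp: mod_poly_less)

lemma link_equiv: "R_link ps a b \<Longrightarrow> R_equiv ps a b"
  by (simp add: R_equiv_def r_into_equivclp)

lemma dup_claim:
  fixes p x0 x1 b :: "'b::field poly"
  assumes n: "degree p > 0" and xb: "(x1 * b) mod p = 1"
    and c1: "inverse (alg_norm p x1) * inverse (alg_norm p b) = 1"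
  shows "(smult (inverse (alg_norm p x1)) (x1 ^ degree p mod p) *
          ((smult (inverse (alg_norm p b)) (b ^ (degree p - 1) mod p) * x0) mod p)) mod p
        = (x0 * x1) mod p"
proof -
  let ?n = "degree p"
  let ?X = "x1 ^ ?n mod p" and ?Y = "b ^ (?n - 1) mod p"
  have one_mod: "(1::'b poly) mod p = 1" using n by (simp add: mod_poly_less)
  have "(smult (inverse (alg_norm p x1)) ?X * ((smult (inverse (alg_norm p b)) ?Y * x0) mod p)) mod p
      = (smult (inverse (alg_norm p x1)) ?X * (smult (inverse (alg_norm p b)) ?Y * x0)) mod p"
    by (rule mod_mult_right_eq)
  also have "smult (inverse (alg_norm p x1)) ?X * (smult (inverse (alg_norm p b)) ?Y * x0)
      = smult (inverse (alg_norm p x1) * inverse (alg_norm p b)) (?X * ?Y * x0)"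
    by (simp add: mult_smult_left mult_smult_right smult_smult ac_simps)
  also have "\<dots> = ?X * ?Y * x0" using c1 by simp
  also have "(?X * ?Y * x0) mod p = (x1 ^ ?n * b ^ (?n - 1) * x0) mod p"
    by (metis mod_mult_eq mod_mult_left_eq)
  also have "x1 ^ ?n * b ^ (?n - 1) * x0 = x1 * x0 * (x1 * b) ^ (?n - 1)"
  proof -
    have "?n = Suc (?n - 1)" using n by simp
    then have "x1 ^ ?n = x1 * x1 ^ (?n - 1)" by (metis power_Suc)
    then show ?thesis by (simp add: power_mult_distrib ac_simps)
  qed
  also have "(x1 * x0 * (x1 * b) ^ (?n - 1)) mod p = (x1 * x0 * ((x1 * b) ^ (?n - 1) mod p)) mod p"
    by (simp add: mod_mult_right_eq)
  also have "(x1 * b) ^ (?n - 1) mod p = 1"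
    by (metis power_mod xb power_one one_mod)
  finally show ?thesis by (simp add: mult.commute)
qed

lemma dup_chain:
  fixes p :: "'a::field poly"
  assumes m: "mon (p # qs)" and x: "x0 # x1 # xs \<in> torus_points (p # p # qs)"
  shows "R_equiv (p # p # qs) (x0 # x1 # xs) (((x0 * x1) mod p) # 1 # xs)"
proof -
  let ?n = "degree p"
  let ?ps = "p # p # qs"
  have mp: "lead_coeff p = 1" "degree p > 0" using m by (auto simp: mon_def)
  have pnz: "p \<noteq> 0" using mp by auto
  have m2: "mon ?ps" using mon_Cons_dup[OF m] .
  note xx = x[unfolded tp_Cons2_iff]
  have N1: "alg_norm p x1 \<noteq> 0" using tp_norm_nz[OF x, of 1] by simp
  obtain b where db: "degree b < ?n" and xb: "(x1 * b) mod p = 1"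
    using inv_exists[OF mp(2) N1] by blast
  have Nb: "alg_norm p x1 * alg_norm p b = 1"
  proof -
    have e: "alg_norm p ((x1 * b) mod p) = alg_norm p x1 * alg_norm p b" by (simp add: norm_mod norm_mult[OF pnz])
    have "alg_norm p ((x1 * b) mod p) = 1" using xb norm_one by simp
    then show ?thesis using e by simp
  qed
  have Nbnz: "alg_norm p b \<noteq> 0" using Nb by auto
  have c1: "inverse (alg_norm p x1) * inverse (alg_norm p b) = 1"
    using Nb by (metis inverse_1 inverse_mult_distrib)
  have one_eq: "replicate (length qs + 2) (1::'a poly) = 1 # 1 # replicate (length qs) 1"
    by (rule replicate_Suc2)
  have lenps: "length ?ps = length qs + 2" by simp
  have one_mod: "(1::'a poly) mod p = 1" using mp by (simp add: mod_poly_less)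
  define E1 where "E1 = smult (inverse (alg_norm p b)) (b ^ (?n - 1) mod p)"
  have L1: "R_link ?ps (replicate (length qs + 2) 1) (E1 # (b ^ 1 mod p) # replicate (length qs) 1)"
    unfolding E1_def using basic_link[OF m db Nbnz, of 1] mp by simp
  have T1: "R_link ?ps (tmul ?ps (replicate (length qs + 2) 1) (x0 # x1 # xs))
      (tmul ?ps (E1 # (b ^ 1 mod p) # replicate (length qs) 1) (x0 # x1 # xs))"
    using translate_link[OF m2 L1 x] .
  have t1: "tmul ?ps (replicate (length qs + 2) 1) (x0 # x1 # xs) = x0 # x1 # xs"
    using tmul_one_left[OF x] lenps by simp
  define x' where "x' = ((E1 * x0) mod p) # 1 # xs"
  have t2: "tmul ?ps (E1 # (b ^ 1 mod p) # replicate (length qs) 1) (x0 # x1 # xs) = x'"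
    using xx db xb tmul_one_gen[of xs qs] by (simp add: x'_def mod_poly_less mult.commute)
  have e1: "R_equiv ?ps (x0 # x1 # xs) x'" using T1 t1 t2 link_equiv by metis
  have x'tp: "x' \<in> torus_points ?ps" using T1 t2 by (simp add: R_link_def)
  define E0 where "E0 = smult (inverse (alg_norm p x1)) (x1 ^ ?n mod p)"
  have L0: "R_link ?ps (replicate (length qs + 2) 1) (E0 # (x1 ^ 0 mod p) # replicate (length qs) 1)"
    unfolding E0_def using basic_link[OF m _ N1, of 0] xx by simp
  have T0: "R_link ?ps (tmul ?ps (replicate (length qs + 2) 1) x')
      (tmul ?ps (E0 # (x1 ^ 0 mod p) # replicate (length qs) 1) x')"
    using translate_link[OF m2 L0 x'tp] .
  have t3: "tmul ?ps (replicate (length qs + 2) 1) x' = x'"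
    using tmul_one_left[OF x'tp] lenps by simp
  have t4: "tmul ?ps (E0 # (x1 ^ 0 mod p) # replicate (length qs) 1) x' = ((x0 * x1) mod p) # 1 # xs"
  proof -
    have "(E0 * ((E1 * x0) mod p)) mod p = (x0 * x1) mod p"
      unfolding E0_def E1_def using dup_claim[OF mp(2) xb c1] .
    then show ?thesis using xx one_mod tmul_one_gen[of xs qs] by (simp add: x'_def)
  qed
  have e2: "R_equiv ?ps x' (((x0 * x1) mod p) # 1 # xs)" using T0 t3 t4 link_equiv by metis
  show ?thesis using e1 e2 unfolding R_equiv_def by (rule equivclp_trans)
qed

lemma dup_equiv:
  assumes m: "mon (p # qs)" and e: "R_equiv (p # p # qs) a b"
  shows "R_equiv (p # qs) (dupm p a) (dupm p b)"
  using equivclp_map[of "R_link (p # p # qs)" "R_link (p # qs)" "dupm p"] dup_link[OF m] e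
  unfolding R_equiv_def by blast

lemma dups_equiv:
  assumes m: "mon (p # qs)" and e: "R_equiv (p # qs) a b"
  shows "R_equiv (p # p # qs) (dups a) (dups b)"
  using equivclp_map[of "R_link (p # qs)" "R_link (p # p # qs)" dups] dups_link[OF m] e
  unfolding R_equiv_def by blast

lemma dup_kernel:
  fixes p :: "'a::field poly"
  assumes m: "mon (p # qs)"
  shows "R_trivial (p # p # qs) = {x \<in> carrier (torus_group (p # p # qs)). dupm p x \<in> R_trivial (p # qs)}"
proof (rule equalityI; rule subsetI)
  have mp: "lead_coeff p = 1" "degree p > 0" using m by (auto simp: mon_def)
  have one_mod: "(1::'a poly) mod p = 1" using mp by (simp add: mod_poly_less)
  have rep2: "replicate (length (p # p # qs)) (1::'a poly) = 1 # 1 # replicate (length qs) 1" by simp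
  have rep1: "replicate (length (p # qs)) (1::'a poly) = 1 # replicate (length qs) 1" by simp
  {
    fix x assume "x \<in> R_trivial (p # p # qs)"
    then have x: "x \<in> torus_points (p # p # qs)" "R_equiv (p # p # qs) x (1 # 1 # replicate (length qs) 1)"
      by (auto simp: R_trivial_def)
    obtain x0 x1 xs where xe: "x = x0 # x1 # xs" using tp_cases2[OF x(1)] by blast
    have "R_equiv (p # qs) (dupm p x) (dupm p (1 # 1 # replicate (length qs) 1))"
      using dup_equiv[OF m x(2)] .
    then have "R_equiv (p # qs) (dupm p x) (1 # replicate (length qs) 1)" using one_mod by simp
    moreover have "dupm p x \<in> torus_points (p # qs)" using dup_tp[OF mp(2)] x(1) xe by simp
    ultimately show "x \<in> {x \<in> carrier (torus_group (p # p # qs)). dupm p x \<in> R_trivial (p # qs)}"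
      using x by (simp add: R_trivial_def)
  }
  {
    fix x assume "x \<in> {x \<in> carrier (torus_group (p # p # qs)). dupm p x \<in> R_trivial (p # qs)}"
    then have x: "x \<in> torus_points (p # p # qs)" "R_equiv (p # qs) (dupm p x) (1 # replicate (length qs) 1)"
      by (auto simp: R_trivial_def)
    obtain x0 x1 xs where xe: "x = x0 # x1 # xs" using tp_cases2[OF x(1)] by blast
    have "R_equiv (p # p # qs) (dups (dupm p x)) (dups (1 # replicate (length qs) 1))"
      using dups_equiv[OF m x(2)] .
    then have "R_equiv (p # p # qs) (((x0 * x1) mod p) # 1 # xs) (1 # 1 # replicate (length qs) 1)"
      using xe by simp
    then have "R_equiv (p # p # qs) x (1 # 1 # replicate (length qs) 1)"
      using dup_chain[OF m] x(1) xe unfolding R_equiv_def by (metis equivclp_trans)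
    then show "x \<in> R_trivial (p # p # qs)" using x by (simp add: R_trivial_def)
  }
qed

lemma dup_iso:
  fixes p :: "'a::field poly"
  assumes m: "mon (p # qs)"
  shows "torus_mod_R (p # p # qs) \<cong> torus_mod_R (p # qs)"
proof -
  have mp: "lead_coeff p = 1" "degree p > 0" using m by (auto simp: mon_def)
  have m2: "mon (p # p # qs)" using mon_Cons_dup[OF m] .
  have hom: "dupm p \<in> hom (torus_group (p # p # qs)) (torus_group (p # qs))"
  proof (rule homI)
    fix x assume "x \<in> carrier (torus_group (p # p # qs))"
    then have x: "x \<in> torus_points (p # p # qs)" by simp
    obtain x0 x1 xs where xe: "x = x0 # x1 # xs" using tp_cases2[OF x] by blast
    show "dupm p x \<in> carrier (torus_group (p # qs))" using dup_tp[OF mp(2)] x xe by simp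
  next
    fix x y assume "x \<in> carrier (torus_group (p # p # qs))" "y \<in> carrier (torus_group (p # p # qs))"
    then have x: "x \<in> torus_points (p # p # qs)" and y: "y \<in> torus_points (p # p # qs)" by auto
    obtain x0 x1 xs where xe: "x = x0 # x1 # xs" using tp_cases2[OF x] by blast
    obtain y0 y1 ys where ye: "y = y0 # y1 # ys" using tp_cases2[OF y] by blast
    have "((x0 * y0) mod p * ((x1 * y1) mod p)) mod p = ((x0 * x1) mod p * ((y0 * y1) mod p)) mod p"
      by (simp add: mod_mult_eq ac_simps)
    then show "dupm p (x \<otimes>\<^bsub>torus_group (p # p # qs)\<^esub> y) =
        dupm p x \<otimes>\<^bsub>torus_group (p # qs)\<^esub> dupm p y"
      unfolding tg_mult xe ye by simp
  qed
  have surj: "dupm p ` carrier (torus_group (p # p # qs)) = carrier (torus_group (p # qs))"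
  proof
    show "dupm p ` carrier (torus_group (p # p # qs)) \<subseteq> carrier (torus_group (p # qs))"
      using hom by (auto simp: hom_def)
    show "carrier (torus_group (p # qs)) \<subseteq> dupm p ` carrier (torus_group (p # p # qs))"
    proof
      fix y assume "y \<in> carrier (torus_group (p # qs))"
      then have y: "y \<in> torus_points (p # qs)" by simp
      obtain y0 ys where ye: "y = y0 # ys" using tp_cases1[OF y] by blast
      have d: "degree y0 < degree p" using y ye by (simp add: tp_Cons_iff)
      have "y0 # 1 # ys \<in> torus_points (p # p # qs)" using dups_tp[OF mp(2)] y ye by simp
      moreover have "dupm p (y0 # 1 # ys) = y" using ye d by (simp add: mod_poly_less)
      ultimately show "y \<in> dupm p ` carrier (torus_group (p # p # qs))" by force
    qed
  qed
  show ?thesis unfolding torus_mod_R_def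
    by (rule quot_iso[OF group_torus[OF m2] R_trivial_normal[OF m] hom surj dup_kernel[OF m]])
qed

lemma same_set_iso_aux:
  fixes ps qs :: "'a::field poly list"
  shows "length ps + length qs = N \<Longrightarrow> mon ps \<Longrightarrow> set qs = set ps \<Longrightarrow> torus_mod_R ps \<cong> torus_mod_R qs"
proof (induction N arbitrary: ps qs rule: less_induct)
  case (less N)
  have mq: "mon qs" using mon_set less.prems by blast
  show ?case
  proof (cases "distinct ps")
    case dp: True
    show ?thesis
    proof (cases "distinct qs")
      case True
      then have "mset qs = mset ps" using dp less.prems set_eq_iff_mset_eq_distinct by blast
      then obtain \<sigma> where s: "\<sigma> permutes {..<length ps}" "permute_list \<sigma> ps = qs"
        by (rule mset_eq_permutation)
      show ?thesis using perm_iso[OF less.prems(2) s(1)] s(2) by simp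
    next
      case False
      then obtain as bs cs y where qe: "qs = as @ [y] @ bs @ [y] @ cs" using not_distinct_decomp by blast
      let ?r = "as @ bs @ cs"
      have "mset (y # y # ?r) = mset qs" using qe by simp
      then obtain \<sigma> where s: "\<sigma> permutes {..<length qs}" "permute_list \<sigma> qs = y # y # ?r"
        by (rule mset_eq_permutation)
      have i1: "torus_mod_R qs \<cong> torus_mod_R (y # y # ?r)" using perm_iso[OF mq s(1)] s(2) by simp
      have sr: "set (y # ?r) = set qs" using qe by auto
      have mr: "mon (y # ?r)" using mon_set[OF sr mq] .
      have i2: "torus_mod_R (y # y # ?r) \<cong> torus_mod_R (y # ?r)" using dup_iso[OF mr] .
      have "length ps + length (y # ?r) < N" using less.prems(1) qe by simp
      then have i3: "torus_mod_R ps \<cong> torus_mod_R (y # ?r)"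
        using less.IH less.prems(2,3) sr by blast
      have "torus_mod_R qs \<cong> torus_mod_R (y # ?r)" using iso_trans[OF i1 i2] .
      then have "torus_mod_R (y # ?r) \<cong> torus_mod_R qs"
        using group.iso_sym[OF torus_mod_R_group[OF mq]] by blast
      then show ?thesis using iso_trans[OF i3] by blast
    qed
  next
    case False
    then obtain as bs cs y where pe: "ps = as @ [y] @ bs @ [y] @ cs" using not_distinct_decomp by blast
    let ?r = "as @ bs @ cs"
    have "mset (y # y # ?r) = mset ps" using pe by simp
    then obtain \<sigma> where s: "\<sigma> permutes {..<length ps}" "permute_list \<sigma> ps = y # y # ?r"
      by (rule mset_eq_permutation)
    have i1: "torus_mod_R ps \<cong> torus_mod_R (y # y # ?r)" using perm_iso[OF less.prems(2) s(1)] s(2) by simp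
    have sr: "set (y # ?r) = set ps" using pe by auto
    have mr: "mon (y # ?r)" using mon_set[OF sr less.prems(2)] .
    have i2: "torus_mod_R (y # y # ?r) \<cong> torus_mod_R (y # ?r)" using dup_iso[OF mr] .
    have "length (y # ?r) + length qs < N" using less.prems(1) pe by simp
    then have i3: "torus_mod_R (y # ?r) \<cong> torus_mod_R qs"
      using less.IH mr less.prems(3) sr by (metis)
    show ?thesis using iso_trans[OF iso_trans[OF i1 i2] i3] .
  qed
qed

lemma irreducible_degree_pos:
  fixes p :: "'a::field poly"
  assumes "irreducible p" shows "degree p > 0"
proof (rule ccontr)
  assume "\<not> degree p > 0"
  then have "degree p = 0" by simp
  moreover have "p \<noteq> 0" using assms by (simp add: irreducible_def)
  ultimately have "is_unit p" using is_unit_iff_degree by blast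
  then show False using irreducible_not_unit[OF assms] by simp
qed

theorem mainTheorem13:
  fixes ps :: "'a::field poly list" and r :: "nat list"
  assumes "length r = length ps"
    and "\<forall>i<length ps. sep_ext_poly (ps!i)"
    and "\<forall>i<length r. r!i > 0"
  shows "torus_mod_R ps \<cong>
         torus_mod_R (concat (map (\<lambda>i. replicate (r!i) (ps!i)) [0..<length ps]))"
proof -
  have m: "mon ps"
    unfolding mon_def
  proof
    fix p assume "p \<in> set ps"
    then obtain i where i: "i < length ps" "p = ps ! i" by (metis in_set_conv_nth)
    then have "sep_ext_poly p" using assms(2) by simp
    then show "lead_coeff p = 1 \<and> degree p > 0"
      by (simp add: sep_ext_poly_def irreducible_degree_pos)
  qed
  have "set (concat (map (\<lambda>i. replicate (r!i) (ps!i)) [0..<length ps])) = set ps"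
  proof -
    have "set (concat (map (\<lambda>i. replicate (r!i) (ps!i)) [0..<length ps])) = (\<Union>i<length ps. {ps!i})"
      using assms(1,3) by (auto simp: set_replicate_conv_if)
    also have "\<dots> = set ps" by (auto simp: in_set_conv_nth)
    finally show ?thesis .
  qed
  then show ?thesis using same_set_iso_aux[OF refl m] by blast
qed

end
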